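(* Let $p$ be prime with $X_0(p)$ of genus $g\ge1$. For $q,q'\in D(0,0.01)$ one has $|\mu_\infty(q')-\mu_\infty(q)|_\infty\le 7|q'-q|$, and for $q,q'\in D(0,1-\frac{1}{2p})$ one has $|\mu_0(q')-\mu_0(q)|_\infty\le 96p^4|q'-q|$. In particular the Jacobi integration map is Lipschitz on $D_\infty=D(0,0.005)$ with constant at most $7$ and on $D_0=D(0,1-1/p)$ with constant at most $96p^4$.
   Context: For $\tau$ in the upper half plane put $q_\infty=\exp(2i\pi\tau)$, $q_0=\exp(-2i\pi/(p\tau))$. $\mathcal D_1$ is the set of differentials $\omega=f(q)\,dq/q$ on $X_0(p)$, with $f=\sum_{k\ge1}a_kq^k$ running over the weight-2 cusp forms on $\Gamma_0(p)$ that are Hecke eigenforms with $a_1=1$; each such $\omega$ equals $\frac{f(q_\infty)}{q_\infty}dq_\infty$ and also $\pm\frac{f(q_0)}{q_0}dq_0$ (Atkin–Lehner eigenvalue $\pm1$). The Jacobi maps on the discs are $\mu_\infty(q)=(\int^{q}\omega)_{\omega\in\mathcal D_1}$ (integration in the coordinate $q_\infty$) and $\mu_0(q)=(\int^{q}\omega)_{\omega\in\mathcal D_1}$ (integration in the coordinate $q_0$), defined up to a common additive constant (choice of a base point); so $\mu_\infty(q')-\mu_\infty(q)=(\int_q^{q'}\frac{f(t)}{t}dt)_\omega$, and similarly for $\mu_0$ with the signs $\pm$. $\mathbb C^{\mathcal D_1}$ carries the sup norm $|\cdot|_\infty$ in its canonical basis. *)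

theory Defs
  imports "HOL-Complex_Analysis.Complex_Analysis" "HOL-Computational_Algebra.Primes"
begin

definition uhp :: "complex set" where
  "uhp = {z. Im z > 0}"

definition slash2 :: "(complex \<Rightarrow> complex) \<Rightarrow> int \<Rightarrow> int \<Rightarrow> int \<Rightarrow> int \<Rightarrow> complex \<Rightarrow> complex" where
  "slash2 f a b c d \<tau> =
     f ((of_int a * \<tau> + of_int b) / (of_int c * \<tau> + of_int d)) / (of_int c * \<tau> + of_int d) ^ 2"

text \<open>Weight-2 cusp forms on Gamma_0(N): holomorphic on the upper half plane, invariant under
  the weight-2 slash action of Gamma_0(N), and vanishing at every cusp: for every
  gamma in SL_2(Z), f|gamma is a holomorphic function of exp(2 pi i tau / N) (every cusp width
  of Gamma_0(N) divides N) vanishing at 0.\<close>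
definition weight2_cusp_form :: "nat \<Rightarrow> (complex \<Rightarrow> complex) \<Rightarrow> bool" where
  "weight2_cusp_form N f \<longleftrightarrow>
     f holomorphic_on uhp \<and>
     (\<forall>a b c d. a * d - b * c = 1 \<and> int N dvd c \<longrightarrow>
        (\<forall>\<tau>\<in>uhp. slash2 f a b c d \<tau> = f \<tau>)) \<and>
     (\<forall>a b c d. a * d - b * c = 1 \<longrightarrow>
        (\<exists>h. h holomorphic_on ball 0 1 \<and> h 0 = 0 \<and>
             (\<forall>\<tau>\<in>uhp. slash2 f a b c d \<tau> = h (exp (2 * pi * \<i> * \<tau> / of_nat N)))))"

definition qexp_inf :: "(complex \<Rightarrow> complex) \<Rightarrow> complex \<Rightarrow> complex" where
  "qexp_inf f = (SOME F. F holomorphic_on ball 0 1 \<and>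
                   (\<forall>\<tau>\<in>uhp. f \<tau> = F (exp (2 * pi * \<i> * \<tau>))))"

definition fcoeff :: "(complex \<Rightarrow> complex) \<Rightarrow> nat \<Rightarrow> complex" where
  "fcoeff f n = (deriv ^^ n) (qexp_inf f) 0 / of_nat (fact n)"

text \<open>Hecke operators T_l (l prime, l not dividing p) and U_p in weight 2 on q-expansion coefficients.\<close>
definition hecke_coeff :: "nat \<Rightarrow> nat \<Rightarrow> (nat \<Rightarrow> complex) \<Rightarrow> nat \<Rightarrow> complex" where
  "hecke_coeff N l a n =
     (if l dvd N then a (l * n)
      else a (l * n) + (if l dvd n then of_nat l * a (n div l) else 0))"

definition hecke_eigenform :: "nat \<Rightarrow> (complex \<Rightarrow> complex) \<Rightarrow> bool" where
  "hecke_eigenform N f \<longleftrightarrow>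
     (\<forall>l::nat. prime l \<longrightarrow> (\<exists>ev. \<forall>n. hecke_coeff N l (fcoeff f) n = ev * fcoeff f n))"

text \<open>The set D_1 (identified with the set of normalized eigenforms f).\<close>
definition D1 :: "nat \<Rightarrow> (complex \<Rightarrow> complex) set" where
  "D1 p = {f. weight2_cusp_form p f \<and> hecke_eigenform p f \<and> fcoeff f 1 = 1}"

text \<open>Expansion of omega = 2 pi i f(tau) d tau in the coordinate q_0 = exp(-2 pi i/(p tau)):
  omega = G(q_0) dq_0/q_0 with G(exp(2 pi i sigma)) = f(-1/(p sigma)) / (p sigma^2).\<close>
definition qexp_zero :: "nat \<Rightarrow> (complex \<Rightarrow> complex) \<Rightarrow> complex \<Rightarrow> complex" where
  "qexp_zero p f = (SOME G. G holomorphic_on ball 0 1 \<and>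
                   (\<forall>\<sigma>\<in>uhp. G (exp (2 * pi * \<i> * \<sigma>)) =
                        f (- 1 / (of_nat p * \<sigma>)) / (of_nat p * \<sigma> ^ 2)))"

text \<open>Components of mu_infinity(q') - mu_infinity(q) and mu_0(q') - mu_0(q).\<close>
definition mu_inf_diff :: "(complex \<Rightarrow> complex) \<Rightarrow> complex \<Rightarrow> complex \<Rightarrow> complex" where
  "mu_inf_diff f q q' = contour_integral (linepath q q') (\<lambda>t. qexp_inf f t / t)"

definition mu_zero_diff :: "nat \<Rightarrow> (complex \<Rightarrow> complex) \<Rightarrow> complex \<Rightarrow> complex \<Rightarrow> complex" where
  "mu_zero_diff p f q q' = contour_integral (linepath q q') (\<lambda>t. qexp_zero p f t / t)"

end

theory Submission
  imports Defs
begin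

definition mob :: "int \<Rightarrow> int \<Rightarrow> int \<Rightarrow> int \<Rightarrow> complex \<Rightarrow> complex" where
  "mob a b c d z = (of_int a * z + of_int b) / (of_int c * z + of_int d)"

lemma uhp_iff: "z \<in> uhp \<longleftrightarrow> Im z > 0"
  by (simp add: uhp_def)

lemma lin_nz:
  assumes "(c::int) \<noteq> 0 \<or> d \<noteq> 0" "Im z > 0"
  shows "of_int c * z + of_int d \<noteq> 0"
proof
  assume h: "of_int c * z + of_int d = 0"
  then have "Im (of_int c * z + of_int d) = 0" by simp
  then have "c = 0" using assms(2) by simp
  with h assms(1) show False by simp
qed

lemma denom_nz:
  assumes "a * d - b * c = (1::int)" "Im z > 0"
  shows "of_int c * z + of_int d \<noteq> 0"
proof -
  have "c \<noteq> 0 \<or> d \<noteq> 0" using assms(1) by auto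
  then show ?thesis using lin_nz assms(2) by blast
qed

lemma numer_nz:
  assumes "a * d - b * c = (1::int)" "Im z > 0"
  shows "of_int a * z + of_int b \<noteq> 0"
proof -
  have "a \<noteq> 0 \<or> b \<noteq> 0" using assms(1) by auto
  then show ?thesis using lin_nz assms(2) by blast
qed

lemma Im_mob:
  assumes "a * d - b * c = (1::int)" "Im z > 0"
  shows "Im (mob a b c d z) = Im z / (cmod (of_int c * z + of_int d))^2"
proof -
  have det: "real_of_int a * real_of_int d - real_of_int b * real_of_int c = 1"
    using assms(1) by (metis of_int_1 of_int_diff of_int_mult)
  have "Im (mob a b c d z) = (Im (of_int a * z + of_int b) * Re (of_int c * z + of_int d)
      - Re (of_int a * z + of_int b) * Im (of_int c * z + of_int d)) /
      ((Re (of_int c * z + of_int d))\<^sup>2 + (Im (of_int c * z + of_int d))\<^sup>2)"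
    unfolding mob_def by (simp add: Im_divide power2_eq_square)
  also have "(Im (of_int a * z + of_int b) * Re (of_int c * z + of_int d)
      - Re (of_int a * z + of_int b) * Im (of_int c * z + of_int d)) =
      Im z * (real_of_int a * real_of_int d - real_of_int b * real_of_int c)"
    by (simp add: algebra_simps)
  also have "\<dots> = Im z" using det by simp
  also have "(Re (of_int c * z + of_int d))\<^sup>2 + (Im (of_int c * z + of_int d))\<^sup>2
      = (cmod (of_int c * z + of_int d))^2"
    by (simp add: cmod_power2)
  finally show ?thesis .
qed

lemma Im_mob_pos:
  assumes "a * d - b * c = (1::int)" "Im z > 0"
  shows "Im (mob a b c d z) > 0"
  using Im_mob[OF assms] denom_nz[OF assms] assms(2) by simp

inductive_set orb :: "complex \<Rightarrow> complex set" for z where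
  base: "z \<in> orb z"
| plus: "w \<in> orb z \<Longrightarrow> w + 1 \<in> orb z"
| minus: "w \<in> orb z \<Longrightarrow> w - 1 \<in> orb z"
| inv: "w \<in> orb z \<Longrightarrow> -1 / w \<in> orb z"

lemma orb_mob:
  assumes "Im z > 0" "w \<in> orb z"
  shows "\<exists>a b c d. a * d - b * c = (1::int) \<and> w = mob a b c d z"
  using assms(2)
proof induction
  case base
  have "1 * 1 - 0 * 0 = (1::int) \<and> z = mob 1 0 0 1 z" by (simp add: mob_def)
  then show ?case by blast
next
  case (plus w)
  then obtain a b c d where h: "a * d - b * c = (1::int)" "w = mob a b c d z" by blast
  have nz: "of_int c * z + of_int d \<noteq> 0" using denom_nz[OF h(1) assms(1)] .
  have "(a + c) * d - (b + d) * c = 1" using h(1) by (simp add: algebra_simps)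
  moreover have "w + 1 = mob (a + c) (b + d) c d z"
    using nz h(2) by (simp add: mob_def field_simps)
  ultimately show ?case by blast
next
  case (minus w)
  then obtain a b c d where h: "a * d - b * c = (1::int)" "w = mob a b c d z" by blast
  have nz: "of_int c * z + of_int d \<noteq> 0" using denom_nz[OF h(1) assms(1)] .
  have "(a - c) * d - (b - d) * c = 1" using h(1) by (simp add: algebra_simps)
  moreover have "w - 1 = mob (a - c) (b - d) c d z"
    using nz h(2) by (simp add: mob_def field_simps)
  ultimately show ?case by blast
next
  case (inv w)
  then obtain a b c d where h: "a * d - b * c = (1::int)" "w = mob a b c d z" by blast
  have nz: "of_int c * z + of_int d \<noteq> 0" using denom_nz[OF h(1) assms(1)] .
  have nz2: "of_int a * z + of_int b \<noteq> 0" using numer_nz[OF h(1) assms(1)] .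
  have "(- c) * b - (- d) * a = 1" using h(1) by (simp add: algebra_simps)
  moreover have "-1 / w = mob (- c) (- d) a b z"
  proof -
    have "-1 / w = - (of_int c * z + of_int d) / (of_int a * z + of_int b)"
      using h(2) by (simp add: mob_def)
    then show ?thesis by (simp add: mob_def)
  qed
  ultimately show ?case by blast
qed

lemma orb_Im_pos: "Im z > 0 \<Longrightarrow> w \<in> orb z \<Longrightarrow> Im w > 0"
  using orb_mob Im_mob_pos by blast

lemma orb_shift_nat: "w \<in> orb z \<Longrightarrow> w + of_nat n \<in> orb z \<and> w - of_nat n \<in> orb z"
proof (induction n)
  case 0 then show ?case by simp
next
  case (Suc n)
  then have "w + of_nat n + 1 \<in> orb z" "w - of_nat n - 1 \<in> orb z"
    by (auto intro: orb.plus orb.minus)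
  then show ?case by (simp add: algebra_simps)
qed

lemma orb_shift: "w \<in> orb z \<Longrightarrow> w + of_int k \<in> orb z"
proof (cases "k \<ge> 0")
  case True
  assume w: "w \<in> orb z"
  have "of_int k = (of_nat (nat k) :: complex)" using True by simp
  then show ?thesis using orb_shift_nat[OF w, of "nat k"] by simp
next
  case False
  assume w: "w \<in> orb z"
  have "of_int k = - (of_nat (nat (- k)) :: complex)" using False by simp
  then show ?thesis using orb_shift_nat[OF w, of "nat (-k)"] by simp
qed

lemma finite_small_lin:
  assumes "Im z > 0"
  shows "finite {(c::int, d::int). cmod (of_int c * z + of_int d) \<le> 1}"
proof -
  define C where "C = \<lceil>1 / Im z\<rceil>"
  define D where "D = \<lceil>1 + real_of_int C * cmod z\<rceil>"
  have sub: "{(c::int, d::int). cmod (of_int c * z + of_int d) \<le> 1} \<subseteq> {-C..C} \<times> {-D..D}"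
  proof clarify
    fix c d :: int
    assume h: "cmod (of_int c * z + of_int d) \<le> 1"
    have "\<bar>Im (of_int c * z + of_int d)\<bar> \<le> 1" using h abs_Im_le_cmod order_trans by blast
    then have "\<bar>real_of_int c\<bar> * Im z \<le> 1" using assms by (simp add: abs_mult)
    then have c1: "\<bar>real_of_int c\<bar> \<le> 1 / Im z" using assms by (simp add: field_simps)
    then have "\<lceil>real_of_int \<bar>c\<bar>\<rceil> \<le> C" unfolding C_def by (intro ceiling_mono) simp
    then have "\<bar>c\<bar> \<le> C" by (metis ceiling_of_int of_int_abs)
    then have cC: "-C \<le> c \<and> c \<le> C" by auto
    have "cmod (of_int d) \<le> cmod (of_int c * z + of_int d) + cmod (of_int c * z)"
      by (metis add_diff_cancel_left' norm_triangle_ineq4 add.commute)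
    also have "\<dots> \<le> 1 + \<bar>real_of_int c\<bar> * cmod z" using h by (simp add: norm_mult)
    also have "\<dots> \<le> 1 + real_of_int C * cmod z"
      using \<open>\<bar>c\<bar> \<le> C\<close> by (intro add_left_mono mult_right_mono) auto
    finally have "\<bar>real_of_int d\<bar> \<le> 1 + real_of_int C * cmod z" by simp
    then have "\<lceil>real_of_int \<bar>d\<bar>\<rceil> \<le> D" unfolding D_def by (intro ceiling_mono) simp
    then have "\<bar>d\<bar> \<le> D" by (metis ceiling_of_int of_int_abs)
    then show "c \<in> {-C..C} \<and> d \<in> {-D..D}" using cC by auto
  qed
  show ?thesis by (rule finite_subset[OF sub]) simp
qed

lemma Im_neg_inv: "Im (-1 / w) = Im w / (cmod w)^2"
  by (simp add: Im_divide cmod_power2)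

theorem reduction:
  assumes "Im z > 0"
  shows "\<exists>w\<in>orb z. \<bar>Re w\<bar> \<le> 1/2 \<and> cmod w \<ge> 1 \<and> (Im w)^2 \<ge> 3/4"
proof -
  define V where "V = Im ` {w \<in> orb z. Im w \<ge> Im z}"
  have "V \<subseteq> (\<lambda>(c,d). Im z / (cmod (of_int c * z + of_int d))^2) `
            {(c::int, d::int). cmod (of_int c * z + of_int d) \<le> 1}"
  proof
    fix v assume "v \<in> V"
    then obtain w where w: "w \<in> orb z" "Im w \<ge> Im z" "v = Im w" unfolding V_def by auto
    then obtain a b c d where h: "a * d - b * c = (1::int)" "w = mob a b c d z"
      using orb_mob assms by blast
    have eq: "Im w = Im z / (cmod (of_int c * z + of_int d))^2" using Im_mob[OF h(1) assms] h(2) by simp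
    have "cmod (of_int c * z + of_int d) \<le> 1"
    proof (rule ccontr)
      assume "\<not> ?thesis"
      then have "(cmod (of_int c * z + of_int d))^2 > 1"
        by (simp add: one_less_power)
      then have "Im z / (cmod (of_int c * z + of_int d))^2 < Im z"
        using assms by (simp add: divide_less_eq)
      then show False using eq w(2) by simp
    qed
    then show "v \<in> (\<lambda>(c,d). Im z / (cmod (of_int c * z + of_int d))^2) `
            {(c::int, d::int). cmod (of_int c * z + of_int d) \<le> 1}"
      using eq w(3) by (auto intro!: image_eqI[of _ _ "(c,d)"])
  qed
  then have finV: "finite V" using finite_small_lin[OF assms] finite_surj by blast
  have "Im z \<in> V" unfolding V_def using orb.base by auto
  then have neV: "V \<noteq> {}" by auto
  have "Max V \<in> V" using finV neV by simp
  then obtain w0 where w0: "w0 \<in> orb z" "Im w0 = Max V" "Im w0 \<ge> Im z" unfolding V_def by auto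
  have maxp: "Im w \<le> Im w0" if "w \<in> orb z" for w
  proof (cases "Im w \<ge> Im z")
    case True
    then have "Im w \<in> V" unfolding V_def using that by auto
    then show ?thesis using w0(2) finV by simp
  next
    case False then show ?thesis using w0(3) by simp
  qed
  define k where "k = - \<lfloor>Re w0 + 1/2\<rfloor>"
  define w1 where "w1 = w0 + of_int k"
  have w1o: "w1 \<in> orb z" unfolding w1_def using orb_shift[OF w0(1)] .
  have Rew1: "Re w1 = Re w0 - of_int \<lfloor>Re w0 + 1/2\<rfloor>" unfolding w1_def k_def by simp
  have rb: "\<bar>Re w1\<bar> \<le> 1/2"
    using Rew1 of_int_floor_le[of "Re w0 + 1/2"] real_of_int_floor_add_one_gt[of "Re w0 + 1/2"]
    by linarith
  have Imw1: "Im w1 = Im w0" unfolding w1_def by simp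
  have pos: "Im w1 > 0" using orb_Im_pos[OF assms w1o] .
  have "-1 / w1 \<in> orb z" using orb.inv[OF w1o] .
  then have "Im (-1/w1) \<le> Im w1" using maxp[of "-1/w1"] Imw1 by linarith
  then have le1: "Im w1 / (cmod w1)^2 \<le> Im w1" using Im_neg_inv by simp
  have "w1 \<noteq> 0" using pos by auto
  then have m0: "(cmod w1)^2 > 0" by simp
  from le1 m0 have "Im w1 \<le> Im w1 * (cmod w1)^2" by (simp add: divide_le_eq)
  then have m1: "1 \<le> (cmod w1)^2" using pos by simp
  then have c1: "cmod w1 \<ge> 1" using abs_le_square_iff[of 1 "cmod w1"] by simp
  have "(cmod w1)^2 = (Re w1)^2 + (Im w1)^2" by (simp add: cmod_power2)
  moreover have "(Re w1)^2 \<le> (1/2)^2"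
    using rb abs_le_square_iff[of "Re w1" "1/2"] by simp
  ultimately have "(Im w1)^2 \<ge> 3/4" using m1 by (simp add: power2_eq_square)
  then show ?thesis using w1o rb c1 by blast
qed


lemma slash2_mob: "slash2 f a b c d z = f (mob a b c d z) / (of_int c * z + of_int d)^2"
  by (simp add: slash2_def mob_def)

lemma j_comp:
  assumes "of_int c2 * z + of_int d2 \<noteq> (0::complex)"
  shows "of_int c1 * mob a2 b2 c2 d2 z + of_int d1 =
    (of_int (c1*a2+d1*c2) * z + of_int (c1*b2+d1*d2)) / (of_int c2 * z + of_int d2)"
  using assms by (simp add: mob_def field_simps)

lemma n_comp:
  assumes "of_int c2 * z + of_int d2 \<noteq> (0::complex)"
  shows "of_int a1 * mob a2 b2 c2 d2 z + of_int b1 =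
    (of_int (a1*a2+b1*c2) * z + of_int (a1*b2+b1*d2)) / (of_int c2 * z + of_int d2)"
  using assms by (simp add: mob_def field_simps)

lemma mob_comp:
  assumes "of_int c2 * z + of_int d2 \<noteq> (0::complex)"
  shows "mob a1 b1 c1 d1 (mob a2 b2 c2 d2 z) =
     mob (a1*a2+b1*c2) (a1*b2+b1*d2) (c1*a2+d1*c2) (c1*b2+d1*d2) z"
proof -
  have "mob a1 b1 c1 d1 (mob a2 b2 c2 d2 z) =
    ((of_int (a1*a2+b1*c2) * z + of_int (a1*b2+b1*d2)) / (of_int c2 * z + of_int d2)) /
    ((of_int (c1*a2+d1*c2) * z + of_int (c1*b2+d1*d2)) / (of_int c2 * z + of_int d2))"
    unfolding mob_def[of a1 b1 c1 d1] using j_comp[OF assms] n_comp[OF assms] by simp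
  also have "\<dots> = mob (a1*a2+b1*c2) (a1*b2+b1*d2) (c1*a2+d1*c2) (c1*b2+d1*d2) z"
    using assms by (simp add: mob_def)
  finally show ?thesis .
qed

lemma slash_comp:
  assumes "a2 * d2 - b2 * c2 = (1::int)" "Im z > 0"
  shows "slash2 (slash2 f a1 b1 c1 d1) a2 b2 c2 d2 z =
     slash2 f (a1*a2+b1*c2) (a1*b2+b1*d2) (c1*a2+d1*c2) (c1*b2+d1*d2) z"
proof -
  have nz: "of_int c2 * z + of_int d2 \<noteq> (0::complex)" using denom_nz[OF assms] .
  show ?thesis
    unfolding slash2_mob mob_comp[OF nz] j_comp[OF nz]
    using nz by (simp add: power_divide field_simps)
qed

lemma mob_id: "mob 1 0 0 1 z = z" by (simp add: mob_def)

lemma mob_inv: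
  assumes "a * d - b * c = (1::int)" "Im z > 0"
  shows "mob d (-b) (-c) a (mob a b c d z) = z"
proof -
  have nz: "of_int c * z + of_int d \<noteq> (0::complex)" using denom_nz[OF assms] .
  have "mob d (-b) (-c) a (mob a b c d z) = mob (d*a+(-b)*c) (d*b+(-b)*d) ((-c)*a+a*c) ((-c)*b+a*d) z"
    by (rule mob_comp[OF nz])
  also have "\<dots> = mob 1 0 0 1 z" using assms(1) by (simp add: algebra_simps)
  finally show ?thesis by (simp add: mob_id)
qed

lemma weight2_Im:
  assumes "a * d - b * c = (1::int)" "Im z > 0"
  shows "Im (mob a b c d z) * cmod (f (mob a b c d z)) = Im z * cmod (slash2 f a b c d z)"
proof -
  have nz: "of_int c * z + of_int d \<noteq> (0::complex)" using denom_nz[OF assms] .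
  then have "cmod (of_int c * z + of_int d) > 0" by simp
  then show ?thesis
    unfolding Im_mob[OF assms] slash2_mob by (simp add: norm_divide norm_power)
qed


definition ee :: "complex \<Rightarrow> complex" where
  "ee z = exp (2 * complex_of_real pi * \<i> * z)"

definition lg :: "complex \<Rightarrow> complex" where
  "lg q = Ln q / (2 * complex_of_real pi * \<i>)"

lemma ee_conv1: "exp (complex_of_real (2 * pi) * \<i> * z) = ee z"
  by (simp add: ee_def)

lemma ee_conv2: "exp (complex_of_real (2 * pi) * \<i> * z / w) = ee (z / w)"
  by (simp add: ee_def)

lemma ee_conv1': "exp (2 * complex_of_real pi * \<i> * z) = ee z"
  by (simp add: ee_def)

lemma ee_conv2': "exp (2 * complex_of_real pi * \<i> * z / w) = ee (z / w)"
  by (simp add: ee_def)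

lemma ee_nz: "ee z \<noteq> 0" by (simp add: ee_def)

lemma ee_add: "ee (z + w) = ee z * ee w"
  by (simp add: ee_def distrib_left exp_add)

lemma ee_int: "ee (of_int n) = 1"
  unfolding ee_def exp_eq_1 by (intro conjI exI[of _ n]) simp_all

lemma ee_1: "ee 1 = 1" using ee_int[of 1] by simp

lemma exp_2pi_eq:
  assumes "ee t1 = ee t2"
  shows "\<exists>n::int. t1 = t2 + of_int n"
proof -
  obtain n :: int where "2 * complex_of_real pi * \<i> * t1 = 2 * complex_of_real pi * \<i> * t2 + (of_int (2 * n) * pi) * \<i>"
    using assms exp_eq unfolding ee_def by blast
  then have "2 * complex_of_real pi * \<i> * t1 = 2 * complex_of_real pi * \<i> * (t2 + of_int n)" by (simp add: algebra_simps)
  then have "t1 = t2 + of_int n" by simp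
  then show ?thesis by blast
qed

lemma norm_ee: "cmod (ee t) = exp (- 2 * pi * Im t)"
  by (simp add: norm_exp_eq_Re ee_def)

lemma Im_lg:
  assumes "q \<noteq> 0"
  shows "Im (lg q) = - ln (cmod q) / (2 * pi)"
  using assms by (simp add: lg_def Im_divide power2_eq_square field_simps)

lemma lg_uhp:
  assumes "q \<noteq> 0" "cmod q < 1"
  shows "Im (lg q) > 0"
proof -
  have "ln (cmod q) < 0" using assms by simp
  then show ?thesis unfolding Im_lg[OF assms(1)] by (simp add: divide_neg_pos)
qed

lemma ee_lg: "q \<noteq> 0 \<Longrightarrow> ee (lg q) = q"
  by (simp add: ee_def lg_def)

lemma lg_hol: "S \<inter> \<real>\<^sub>\<le>\<^sub>0 = {} \<Longrightarrow> lg holomorphic_on S"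
  unfolding lg_def by (intro holomorphic_intros) (auto simp: disjoint_iff)

locale cf =
  fixes p :: nat and f :: "complex \<Rightarrow> complex"
  assumes prime_p: "prime p" and cfp: "weight2_cusp_form p f"
begin

lemma p_pos: "p > 0" using prime_p prime_gt_0_nat by blast
lemma p_ge2: "p \<ge> 2" using prime_p prime_ge_2_nat by blast

lemma hol: "f holomorphic_on uhp" using cfp unfolding weight2_cusp_form_def by blast

lemma inv_g0:
  "a * d - b * c = 1 \<Longrightarrow> int p dvd c \<Longrightarrow> Im \<tau> > 0 \<Longrightarrow> slash2 f a b c d \<tau> = f \<tau>"
proof -
  assume h: "a * d - b * c = 1" "int p dvd c" "Im \<tau> > 0"
  have "\<forall>\<tau>\<in>uhp. slash2 f a b c d \<tau> = f \<tau>" using cfp h(1,2) unfolding weight2_cusp_form_def by blast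
  then show ?thesis using h(3) by (simp add: uhp_iff)
qed

lemma cusp:
  assumes "a * d - b * c = 1"
  obtains h where "h holomorphic_on ball 0 1" "h 0 = 0"
    "\<And>\<tau>. Im \<tau> > 0 \<Longrightarrow> slash2 f a b c d \<tau> = h (ee (\<tau> / of_nat p))"
proof -
  have "\<exists>h. h holomorphic_on ball 0 1 \<and> h 0 = 0 \<and> (\<forall>\<tau>\<in>uhp. slash2 f a b c d \<tau> = h (exp (2 * pi * \<i> * \<tau> / of_nat p)))"
    using cfp assms unfolding weight2_cusp_form_def by blast
  then obtain h where "h holomorphic_on ball 0 1" "h 0 = 0" "\<forall>\<tau>\<in>uhp. slash2 f a b c d \<tau> = h (exp (2 * pi * \<i> * \<tau> / of_nat p))"
    by blast
  then show ?thesis using that[of h] by (auto simp: uhp_iff ee_conv2 ee_conv2')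
qed

lemma period: "Im \<tau> > 0 \<Longrightarrow> f (\<tau> + 1) = f \<tau>"
  using inv_g0[where a=1 and b=1 and c=0 and d=1 and \<tau>=\<tau>] by (simp add: slash2_def add.commute)

lemma period_int: "Im \<tau> > 0 \<Longrightarrow> f (\<tau> + of_int n) = f \<tau>"
proof -
  have nat: "f (\<tau> + of_nat m) = f \<tau> \<and> f (\<tau> - of_nat m) = f \<tau>" if "Im \<tau> > 0" for m \<tau>
    using that
  proof (induction m arbitrary: \<tau>)
    case 0 then show ?case by simp
  next
    case (Suc m)
    have a: "f (\<tau> + of_nat m + 1) = f (\<tau> + of_nat m)" using period Suc.prems by simp
    have b: "f (\<tau> - of_nat m - 1 + 1) = f (\<tau> - of_nat m - 1)" using period[of "\<tau> - of_nat m - 1"] Suc.prems by simp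
    show ?case using Suc.IH[OF Suc.prems] a b by (simp add: algebra_simps)
  qed
  assume h: "Im \<tau> > 0"
  show ?thesis
  proof (cases "n \<ge> 0")
    case True
    then have "of_int n = (of_nat (nat n) :: complex)" by simp
    then show ?thesis using nat[OF h, of "nat n"] by simp
  next
    case False
    then have "of_int n = - (of_nat (nat (-n)) :: complex)" by simp
    then show ?thesis using nat[OF h, of "nat (-n)"] by simp
  qed
qed

definition F0 :: "complex \<Rightarrow> complex" where
  "F0 q = (if q = 0 then 0 else f (lg q))"

lemma F0_e:
  assumes "Im \<tau> > 0"
  shows "F0 (ee \<tau>) = f \<tau>"
proof -
  define q where "q = ee \<tau>"
  have q0: "q \<noteq> 0" unfolding q_def by (rule ee_nz)
  have "ee (lg q) = ee \<tau>" using q0 ee_lg unfolding q_def by simp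
  then obtain n :: int where n: "lg q = \<tau> + of_int n" using exp_2pi_eq by blast
  have "F0 q = f (\<tau> + of_int n)" using q0 n unfolding F0_def by simp
  also have "\<dots> = f \<tau>" using period_int assms by simp
  finally show ?thesis unfolding q_def .
qed

lemma F0_hol_gen:
  assumes "L holomorphic_on U" "\<And>q. q \<in> U \<Longrightarrow> Im (L q) > 0 \<and> ee (L q) = q"
  shows "F0 holomorphic_on U"
proof -
  have "(f \<circ> L) holomorphic_on U"
    by (rule holomorphic_on_compose_gen[OF assms(1) hol]) (use assms(2) in \<open>auto simp: uhp_iff\<close>)
  moreover have "(f \<circ> L) q = F0 q" if "q \<in> U" for q
    using F0_e[of "L q"] assms(2)[OF that] by simp
  ultimately show ?thesis using holomorphic_cong by (metis (no_types, lifting))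
qed

lemma F0_hol_punct: "F0 holomorphic_on (ball 0 1 - {0})"
proof -
  define U1 where "U1 = ball (0::complex) 1 - {q. Im q = 0 \<and> Re q \<le> 0}"
  define U2 where "U2 = ball (0::complex) 1 - {q. Im q = 0 \<and> Re q \<ge> 0}"
  have cl1: "closed {q::complex. Im q = 0 \<and> Re q \<le> 0}"
    by (intro closed_Collect_conj closed_Collect_eq closed_Collect_le continuous_intros)
  have cl2: "closed {q::complex. Im q = 0 \<and> Re q \<ge> 0}"
    by (intro closed_Collect_conj closed_Collect_eq closed_Collect_le continuous_intros)
  have o1: "open U1" unfolding U1_def using cl1 by (simp add: open_Diff)
  have o2: "open U2" unfolding U2_def using cl2 by (simp add: open_Diff)
  have h1: "F0 holomorphic_on U1"
  proof (rule F0_hol_gen[where L = lg])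
    show "lg holomorphic_on U1"
      by (rule lg_hol) (auto simp: U1_def complex_nonpos_Reals_iff)
    fix q assume "q \<in> U1"
    then have "q \<noteq> 0" "cmod q < 1" unfolding U1_def by auto
    then show "Im (lg q) > 0 \<and> ee (lg q) = q"
      using lg_uhp ee_lg by simp
  qed
  have h2: "F0 holomorphic_on U2"
  proof (rule F0_hol_gen[where L = "\<lambda>q. lg (- q) + 1/2"])
    have "(\<lambda>q. - q) holomorphic_on U2" by (intro holomorphic_intros)
    moreover have "lg holomorphic_on uminus ` U2"
      by (rule lg_hol) (auto simp: U2_def complex_nonpos_Reals_iff)
    ultimately have "(lg \<circ> uminus) holomorphic_on U2"
      using holomorphic_on_compose by blast
    then show "(\<lambda>q. lg (- q) + 1/2) holomorphic_on U2"
      by (intro holomorphic_intros) (simp add: o_def)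
    fix q assume "q \<in> U2"
    then have q0: "q \<noteq> 0" and q1: "cmod q < 1" unfolding U2_def by auto
    have "Im (lg (- q) + 1/2) > 0" using lg_uhp[of "-q"] q0 q1 by simp
    moreover have "ee (lg (- q) + 1/2) = q"
    proof -
      have "ee (1/2) = -1" by (simp add: ee_def)
      then show ?thesis using q0 by (simp add: ee_add ee_lg)
    qed
    ultimately show "Im (lg (- q) + 1/2) > 0 \<and> ee (lg (- q) + 1/2) = q" by simp
  qed
  have "U1 \<union> U2 = ball 0 1 - {0}"
    unfolding U1_def U2_def by (auto simp: complex_eq_iff)
  then show ?thesis using holomorphic_on_Un[OF h1 h2 o1 o2] by simp
qed

end


lemma eq_on_ball_from_uhp:
  assumes "A holomorphic_on ball 0 1" "B holomorphic_on ball 0 1"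
    "\<And>\<sigma>. Im \<sigma> > 0 \<Longrightarrow> A (ee \<sigma>) = B (ee \<sigma>)"
    "q \<in> ball 0 1"
  shows "A q = B q"
proof -
  have z: "A x - B x = 0" if "x \<in> ball 0 1 - {0}" for x
  proof -
    have x0: "x \<noteq> 0" and x1: "cmod x < 1" using that by auto
    have "A (ee (lg x)) = B (ee (lg x))"
      using assms(3) lg_uhp[OF x0 x1] by blast
    then show ?thesis using x0 by (simp add: ee_lg)
  qed
  have "(\<lambda>x. A x - B x) q = 0"
  proof (rule analytic_continuation[where f = "\<lambda>x. A x - B x" and S = "ball 0 1" and U = "ball 0 1 - {0}" and \<xi> = 0])
    show "(\<lambda>x. A x - B x) holomorphic_on ball 0 1" using assms(1,2) by (intro holomorphic_intros)
    show "(0::complex) islimpt ball 0 1 - {0}"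
      using islimpt_punctured[of "0::complex" "ball 0 1"] islimpt_ball[of "0::complex" 0 1] by simp
    show "ball 0 1 - {0} \<subseteq> ball (0::complex) 1" by blast
    show "open (ball (0::complex) 1)" by simp
    show "connected (ball (0::complex) 1)" by simp
    show "(0::complex) \<in> ball 0 1" by simp
    show "q \<in> ball 0 1" by (rule assms(4))
    show "\<And>x. x \<in> ball 0 1 - {0} \<Longrightarrow> (\<lambda>x. A x - B x) x = 0" using z by simp
  qed
  then show ?thesis by simp
qed

lemma exp_Ln_div_p_tendsto:
  assumes "(p::nat) > 0"
  shows "((\<lambda>q. ee (lg q / of_nat p)) \<longlongrightarrow> 0) (at (0::complex))"
proof (rule tendsto_norm_zero_cancel)
  have "((\<lambda>q. cmod q powr (1 / real p)) \<longlongrightarrow> 0) (at (0::complex))"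
    by (rule tendsto_zero_powrI) (use assms in \<open>auto intro!: tendsto_norm_zero tendsto_ident_at\<close>)
  moreover have "\<forall>\<^sub>F q in at (0::complex). cmod q powr (1 / real p) = cmod (ee (lg q / of_nat p))"
  proof -
    have "cmod q powr (1 / real p) = cmod (ee (lg q / of_nat p))" if "q \<noteq> 0" for q
    proof -
      have "ee (lg q / of_nat p) = exp (Ln q / of_nat p)" by (simp add: ee_def lg_def)
      moreover have "Re (Ln q / of_nat p) = ln (cmod q) / real p" using that by simp
      ultimately show ?thesis using that by (simp add: powr_def norm_exp_eq_Re)
    qed
    then show ?thesis by (auto simp: eventually_at_filter)
  qed
  ultimately show "((\<lambda>q. cmod (ee (lg q / of_nat p))) \<longlongrightarrow> 0) (at 0)"
    using Lim_transform_eventually by fastforce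
qed

context cf
begin

lemma F0_tendsto: "(F0 \<longlongrightarrow> 0) (at 0)"
proof -
  obtain h where h: "h holomorphic_on ball 0 1" "h 0 = 0"
    "\<And>\<tau>. Im \<tau> > 0 \<Longrightarrow> slash2 f 1 0 0 1 \<tau> = h (ee (\<tau> / of_nat p))"
    using cusp[where a=1 and b=0 and c=0 and d=1] by auto
  have "isCont h 0"
    using h(1) holomorphic_on_imp_continuous_on continuous_on_interior[of "ball 0 1" h 0]
    by (simp add: interior_open)
  then have lim: "((\<lambda>q. h (ee (lg q / of_nat p))) \<longlongrightarrow> 0) (at 0)"
    using isCont_tendsto_compose[OF _ exp_Ln_div_p_tendsto[OF p_pos]] h(2) by fastforce
  have ev: "\<forall>\<^sub>F q in at 0. h (ee (lg q / of_nat p)) = F0 q"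
  proof -
    have hq: "h (ee (lg q / of_nat p)) = F0 q" if "q \<noteq> 0" "cmod q < 1" for q
    proof -
      have im: "Im (lg q) > 0" using lg_uhp that by blast
      have "F0 q = f (lg q)" using that by (simp add: F0_def)
      also have "\<dots> = slash2 f 1 0 0 1 (lg q)" by (simp add: slash2_def)
      also have "\<dots> = h (ee (lg q / of_nat p))" using h(3) im by blast
      finally show ?thesis by simp
    qed
    then show ?thesis unfolding eventually_at by (intro exI[of _ 1]) (simp add: dist_norm)
  qed
  show ?thesis using Lim_transform_eventually[OF lim ev] .
qed

lemma F0_hol: "F0 holomorphic_on ball 0 1"
proof (rule no_isolated_singularity'[where K = "{0}"])
  show "(F0 \<longlongrightarrow> F0 z) (at z within ball 0 1)" if "z \<in> {0}" for z
    using that tendsto_within_subset[OF F0_tendsto, of "ball 0 1"] by (simp add: F0_def)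
  show "F0 holomorphic_on ball 0 1 - {0}" by (rule F0_hol_punct)
qed auto

lemma qinf_prop: "qexp_inf f holomorphic_on ball 0 1 \<and> (\<forall>\<tau>. Im \<tau> > 0 \<longrightarrow> qexp_inf f (ee \<tau>) = f \<tau>)"
proof -
  have "\<exists>F. F holomorphic_on ball 0 1 \<and> (\<forall>\<tau>\<in>uhp. f \<tau> = F (exp (complex_of_real (2 * pi) * \<i> * \<tau>)))"
    by (intro exI[of _ F0]) (auto simp: uhp_iff F0_hol F0_e[unfolded ee_def])
  from someI_ex[OF this] show ?thesis unfolding qexp_inf_def by (auto simp: uhp_iff ee_def)
qed

lemma qinf_hol: "qexp_inf f holomorphic_on ball 0 1" using qinf_prop by blast

lemma qinf_e: "Im \<tau> > 0 \<Longrightarrow> qexp_inf f (ee \<tau>) = f \<tau>"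
  using qinf_prop by blast

lemma qinf_0: "qexp_inf f 0 = 0"
proof -
  have "qexp_inf f 0 = F0 0"
    by (rule eq_on_ball_from_uhp[OF qinf_hol F0_hol]) (simp_all add: qinf_e F0_e)
  then show ?thesis by (simp add: F0_def)
qed

definition hS where
  "hS = (SOME h. h holomorphic_on ball 0 1 \<and> h 0 = 0 \<and>
    (\<forall>\<tau>. Im \<tau> > 0 \<longrightarrow> slash2 f 0 (-1) 1 0 \<tau> = h (ee (\<tau> / of_nat p))))"

lemma hS_prop: "hS holomorphic_on ball 0 1 \<and> hS 0 = 0 \<and>
    (\<forall>\<tau>. Im \<tau> > 0 \<longrightarrow> slash2 f 0 (-1) 1 0 \<tau> = hS (ee (\<tau> / of_nat p)))"
proof -
  obtain h where "h holomorphic_on ball 0 1" "h 0 = 0"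
    "\<And>\<tau>. Im \<tau> > 0 \<Longrightarrow> slash2 f 0 (-1) 1 0 \<tau> = h (ee (\<tau> / of_nat p))"
    using cusp[where a=0 and b="-1" and c=1 and d=0] by auto
  then have "\<exists>h. h holomorphic_on ball 0 1 \<and> h 0 = 0 \<and>
    (\<forall>\<tau>. Im \<tau> > 0 \<longrightarrow> slash2 f 0 (-1) 1 0 \<tau> = h (ee (\<tau> / of_nat p)))" by blast
  from someI_ex[OF this] show ?thesis unfolding hS_def .
qed

lemma G0_e:
  assumes "Im \<sigma> > 0"
  shows "of_nat p * hS (ee \<sigma>) = f (- 1 / (of_nat p * \<sigma>)) / (of_nat p * \<sigma> ^ 2)"
proof -
  have pp: "(of_nat p :: complex) \<noteq> 0" using p_pos by simp
  have im: "Im (of_nat p * \<sigma>) > 0" using assms p_pos by simp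
  have "ee (of_nat p * \<sigma> / of_nat p) = ee \<sigma>" using pp by simp
  then have "hS (ee \<sigma>) = slash2 f 0 (-1) 1 0 (of_nat p * \<sigma>)"
    using hS_prop im by metis
  also have "\<dots> = f (- 1 / (of_nat p * \<sigma>)) / (of_nat p * \<sigma>)^2" by (simp add: slash2_def)
  finally show ?thesis using pp by (simp add: power2_eq_square field_simps)
qed

lemma qzero_prop: "qexp_zero p f holomorphic_on ball 0 1 \<and>
   (\<forall>\<sigma>. Im \<sigma> > 0 \<longrightarrow> qexp_zero p f (ee \<sigma>) = f (- 1 / (of_nat p * \<sigma>)) / (of_nat p * \<sigma> ^ 2))"
proof -
  have "\<exists>G. G holomorphic_on ball 0 1 \<and>
   (\<forall>\<sigma>\<in>uhp. G (exp (complex_of_real (2 * pi) * \<i> * \<sigma>)) = f (- 1 / (of_nat p * \<sigma>)) / (of_nat p * \<sigma> ^ 2))"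
  proof (rule exI[of _ "\<lambda>w. of_nat p * hS w"], intro conjI ballI)
    show "(\<lambda>w. of_nat p * hS w) holomorphic_on ball 0 1"
      using hS_prop by (intro holomorphic_intros) blast
    fix \<sigma> assume "\<sigma> \<in> uhp"
    then show "of_nat p * hS (exp (complex_of_real (2 * pi) * \<i> * \<sigma>)) = f (- 1 / (of_nat p * \<sigma>)) / (of_nat p * \<sigma> ^ 2)"
      using G0_e[of \<sigma>] by (simp add: uhp_iff ee_def)
  qed
  from someI_ex[OF this] show ?thesis unfolding qexp_zero_def by (auto simp: uhp_iff ee_def)
qed

lemma qzero_hol: "qexp_zero p f holomorphic_on ball 0 1" using qzero_prop by blast

lemma qzero_e: "Im \<sigma> > 0 \<Longrightarrow> qexp_zero p f (ee \<sigma>) = f (- 1 / (of_nat p * \<sigma>)) / (of_nat p * \<sigma> ^ 2)"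
  using qzero_prop by blast

lemma qzero_hS: "q \<in> ball 0 1 \<Longrightarrow> qexp_zero p f q = of_nat p * hS q"
proof (rule eq_on_ball_from_uhp[OF qzero_hol, where B = "\<lambda>q. of_nat p * hS q"])
  show "(\<lambda>q. of_nat p * hS q) holomorphic_on ball 0 1"
    using hS_prop by (intro holomorphic_intros) blast
  fix \<sigma> :: complex assume "Im \<sigma> > 0"
  then show "qexp_zero p f (ee \<sigma>) = of_nat p * hS (ee \<sigma>)"
    using G0_e qzero_e by simp
qed

lemma qzero_0: "qexp_zero p f 0 = 0"
  using qzero_hS[of 0] hS_prop by simp

end


lemma x_exp_le: "(x::real) * exp (- x) \<le> 1"
proof -
  have "x \<le> exp x" using exp_ge_add_one_self[of x] by linarith
  then have "x * exp (-x) \<le> exp x * exp (-x)" by (intro mult_right_mono) auto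
  also have "\<dots> = 1" by (simp add: exp_minus)
  finally show ?thesis .
qed

lemma cusp_bound:
  assumes "h holomorphic_on ball 0 1" "h 0 = 0" "(p::nat) > 0"
  shows "\<exists>K\<ge>0. \<forall>\<tau>. Im \<tau> \<ge> 4/5 \<longrightarrow> Im \<tau> * cmod (h (ee (\<tau> / of_nat p))) \<le> K"
proof -
  obtain k where k: "k holomorphic_on ball 0 1" "\<And>z. norm z < 1 \<Longrightarrow> h z = z * k z"
    using Schwarz3[OF assms(1,2)] by metis
  define \<rho> where "\<rho> = exp (- 2 * pi * (4/5) / real p)"
  have \<rho>1: "\<rho> < 1" unfolding \<rho>_def using assms(3) by simp
  have "cball 0 \<rho> \<subseteq> ball (0::complex) 1" using \<rho>1 by auto
  then have "continuous_on (cball 0 \<rho>) k"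
    using k(1) holomorphic_on_imp_continuous_on holomorphic_on_subset by blast
  then have "compact (k ` cball 0 \<rho>)" by (intro compact_continuous_image) auto
  then obtain B where B: "\<And>z. z \<in> cball 0 \<rho> \<Longrightarrow> cmod (k z) \<le> B"
    using compact_imp_bounded bounded_iff by (metis image_eqI)
  define B' where "B' = max B 0"
  have B': "\<And>z. z \<in> cball 0 \<rho> \<Longrightarrow> cmod (k z) \<le> B'" "B' \<ge> 0"
    using B unfolding B'_def by force+
  show ?thesis
  proof (intro exI[of _ "B' * real p / (2 * pi)"] conjI allI impI)
    show "0 \<le> B' * real p / (2 * pi)" using B'(2) by simp
    fix \<tau> :: complex assume t: "Im \<tau> \<ge> 4/5"
    define w where "w = ee (\<tau> / of_nat p)"
    have nw: "cmod w = exp (- 2 * pi * Im \<tau> / real p)"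
      unfolding w_def norm_ee by simp
    have "2*pi*(4/5) \<le> 2*pi*Im \<tau>" using t by (intro mult_left_mono) auto
    then have "2*pi*(4/5)/real p \<le> 2*pi*Im \<tau>/real p" by (intro divide_right_mono) auto
    then have "cmod w \<le> \<rho>" unfolding nw \<rho>_def by simp
    then have wc: "w \<in> cball 0 \<rho>" by simp
    have "cmod w < 1" using \<open>cmod w \<le> \<rho>\<close> \<rho>1 by simp
    then have "h w = w * k w" using k(2) by simp
    then have "cmod (h w) \<le> cmod w * B'" using B'(1)[OF wc] by (simp add: norm_mult mult_left_mono)
    then have "Im \<tau> * cmod (h w) \<le> Im \<tau> * (cmod w * B')" using t by (intro mult_left_mono) auto
    also have "\<dots> = (real p / (2 * pi)) * ((2 * pi * Im \<tau> / real p) * exp (- (2 * pi * Im \<tau> / real p))) * B'"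
      unfolding nw using assms(3) by (simp add: field_simps)
    also have "\<dots> \<le> (real p / (2 * pi)) * 1 * B'"
      using x_exp_le[of "2 * pi * Im \<tau> / real p"] B'(2) by (intro mult_right_mono mult_left_mono) auto
    finally show "Im \<tau> * cmod (h (ee (\<tau> / of_nat p))) \<le> B' * real p / (2 * pi)"
      unfolding w_def by (simp add: mult.commute)
  qed
qed

context cf
begin

lemma class_eq:
  assumes d1: "a1 * d1 - b1 * c1 = 1" and d2: "a2 * d2 - b2 * c2 = 1"
    and c: "c1 mod int p = c2 mod int p" and d: "d1 mod int p = d2 mod int p"
    and s: "Im \<sigma> > 0"
  shows "slash2 f a1 b1 c1 d1 \<sigma> = slash2 f a2 b2 c2 d2 \<sigma>"
proof -
  define g1 where "g1 = a1 * d2 - b1 * c2"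
  define g2 where "g2 = - a1 * b2 + b1 * a2"
  define g3 where "g3 = c1 * d2 - d1 * c2"
  define g4 where "g4 = - c1 * b2 + d1 * a2"
  have "g1 * g4 - g2 * g3 = (a1 * d1 - b1 * c1) * (a2 * d2 - b2 * c2)"
    unfolding g1_def g2_def g3_def g4_def by (simp add: algebra_simps)
  then have dg: "g1 * g4 - g2 * g3 = 1" using d1 d2 by simp
  have "int p dvd (c1 - c2)" "int p dvd (d1 - d2)" using c d by (simp_all add: mod_eq_dvd_iff)
  then have "int p dvd ((c1 - c2) * d2 - (d1 - d2) * c2)" by simp
  moreover have "(c1 - c2) * d2 - (d1 - d2) * c2 = g3" unfolding g3_def by (simp add: algebra_simps)
  ultimately have pg: "int p dvd g3" by simp
  have e1: "g1 * a2 + g2 * c2 = a1" 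
  proof -
    have "g1 * a2 + g2 * c2 = a1 * (a2 * d2 - b2 * c2)" unfolding g1_def g2_def by (simp add: algebra_simps)
    then show ?thesis using d2 by simp
  qed
  have e2: "g1 * b2 + g2 * d2 = b1"
  proof -
    have "g1 * b2 + g2 * d2 = b1 * (a2 * d2 - b2 * c2)" unfolding g1_def g2_def by (simp add: algebra_simps)
    then show ?thesis using d2 by simp
  qed
  have e3: "g3 * a2 + g4 * c2 = c1"
  proof -
    have "g3 * a2 + g4 * c2 = c1 * (a2 * d2 - b2 * c2)" unfolding g3_def g4_def by (simp add: algebra_simps)
    then show ?thesis using d2 by simp
  qed
  have e4: "g3 * b2 + g4 * d2 = d1"
  proof -
    have "g3 * b2 + g4 * d2 = d1 * (a2 * d2 - b2 * c2)" unfolding g3_def g4_def by (simp add: algebra_simps)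
    then show ?thesis using d2 by simp
  qed
  have "slash2 f a1 b1 c1 d1 \<sigma> = slash2 (slash2 f g1 g2 g3 g4) a2 b2 c2 d2 \<sigma>"
    using slash_comp[OF d2 s, of f g1 g2 g3 g4] e1 e2 e3 e4 by simp
  also have "\<dots> = slash2 f a2 b2 c2 d2 \<sigma>"
  proof -
    have "Im (mob a2 b2 c2 d2 \<sigma>) > 0" using Im_mob_pos[OF d2 s] .
    then have "slash2 f g1 g2 g3 g4 (mob a2 b2 c2 d2 \<sigma>) = f (mob a2 b2 c2 d2 \<sigma>)"
      using inv_g0[OF dg pg] by blast
    then show ?thesis by (simp add: slash2_mob)
  qed
  finally show ?thesis .
qed

lemma M_bound: "\<exists>M. \<forall>\<tau>. Im \<tau> > 0 \<longrightarrow> Im \<tau> * cmod (f \<tau>) \<le> M"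
proof -
  define P where "P = {0..<int p} \<times> {0..<int p}"
  have finP: "finite P" unfolding P_def by simp
  define Q where "Q = (\<lambda>(x::int\<times>int) (K::real). \<forall>a b c d. a * d - b * c = 1 \<and> c mod int p = fst x \<and> d mod int p = snd x \<longrightarrow>
       (\<forall>\<sigma>. Im \<sigma> \<ge> 4/5 \<longrightarrow> Im \<sigma> * cmod (slash2 f a b c d \<sigma>) \<le> K))"
  have "\<forall>x\<in>P. \<exists>K. Q x K"
  proof
    fix x assume "x \<in> P"
    show "\<exists>K. Q x K"
    proof (cases "\<exists>a b c d. a * d - b * c = 1 \<and> c mod int p = fst x \<and> d mod int p = snd x")
      case False then show ?thesis unfolding Q_def by blast
    next
      case True
      then obtain a0 b0 c0 d0 where A0: "a0 * d0 - b0 * c0 = 1" "c0 mod int p = fst x" "d0 mod int p = snd x"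
        by blast
      obtain h where h: "h holomorphic_on ball 0 1" "h 0 = 0"
        "\<And>\<tau>. Im \<tau> > 0 \<Longrightarrow> slash2 f a0 b0 c0 d0 \<tau> = h (ee (\<tau> / of_nat p))"
        using cusp[OF A0(1)] by metis
      obtain K where K: "\<forall>\<tau>. Im \<tau> \<ge> 4/5 \<longrightarrow> Im \<tau> * cmod (h (ee (\<tau> / of_nat p))) \<le> K"
        using cusp_bound[OF h(1,2) p_pos] by blast
      have "Q x K" unfolding Q_def
      proof (intro allI impI)
        fix a b c d \<sigma>
        assume A: "a * d - b * c = 1 \<and> c mod int p = fst x \<and> d mod int p = snd x" and s: "Im \<sigma> \<ge> 4/5"
        have s0: "Im \<sigma> > 0" using s by simp
        have "slash2 f a b c d \<sigma> = slash2 f a0 b0 c0 d0 \<sigma>"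
          using class_eq[of a d b c a0 d0 b0 c0 \<sigma>] A A0 s0 by simp
        also have "\<dots> = h (ee (\<sigma> / of_nat p))" using h(3) s0 by simp
        finally show "Im \<sigma> * cmod (slash2 f a b c d \<sigma>) \<le> K" using K s by simp
      qed
      then show ?thesis by blast
    qed
  qed
  then obtain Kf where Kf: "\<forall>x\<in>P. Q x (Kf x)" by (metis bchoice)
  define M where "M = (\<Sum>x\<in>P. \<bar>Kf x\<bar>)"
  show ?thesis
  proof (intro exI[of _ M] allI impI)
    fix \<tau> :: complex assume t: "Im \<tau> > 0"
    obtain w where w: "w \<in> orb \<tau>" "(Im w)^2 \<ge> 3/4" using reduction[OF t] by blast
    have wpos: "Im w > 0" using orb_Im_pos[OF t w(1)] .
    have w45: "Im w \<ge> 4/5"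
    proof (rule ccontr)
      assume "\<not> ?thesis"
      then have "Im w < 4/5" by simp
      then have "(Im w)^2 < (4/5)^2" using wpos by (intro power_strict_mono) auto
      then show False using w(2) by (simp add: power2_eq_square)
    qed
    obtain a b c d where A: "a * d - b * c = (1::int)" "w = mob a b c d \<tau>" using orb_mob[OF t w(1)] by blast
    have dA': "d * a - (-b) * (-c) = (1::int)" using A(1) by (simp add: algebra_simps)
    have tw: "mob d (-b) (-c) a w = \<tau>" using mob_inv[OF A(1) t] A(2) by simp
    have "Im \<tau> * cmod (f \<tau>) = Im w * cmod (slash2 f d (-b) (-c) a w)"
      using weight2_Im[OF dA' wpos, of f] tw by simp
    also have "\<dots> \<le> Kf ((-c) mod int p, a mod int p)"
    proof -
      have "((-c) mod int p, a mod int p) \<in> P" unfolding P_def using p_pos by simp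
      then have "Q ((-c) mod int p, a mod int p) (Kf ((-c) mod int p, a mod int p))" using Kf by blast
      then show ?thesis unfolding Q_def using dA' w45 by simp
    qed
    also have "\<dots> \<le> \<bar>Kf ((-c) mod int p, a mod int p)\<bar>" by simp
    also have "\<dots> \<le> M" unfolding M_def
      by (rule member_le_sum) (use p_pos finP in \<open>auto simp: P_def\<close>)
    finally show "Im \<tau> * cmod (f \<tau>) \<le> M" .
  qed
qed

end


lemma eig_bound:
  fixes a :: "nat \<Rightarrow> complex" and lam :: complex and l :: nat and mu C :: real
  assumes C: "\<And>n. cmod (a n) \<le> C * real n" and l: "l \<ge> 1" and a1: "a 1 \<noteq> 0" and mu: "mu \<ge> 0"
    and rel: "\<And>n. cmod lam * cmod (a n) \<le> cmod (a (l * n)) + (if l dvd n then mu * cmod (a (n div l)) else 0)"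
  shows "cmod lam \<le> real l + mu / real l"
proof -
  define \<phi> where "\<phi> n y = cmod (a n) * y * exp (- 2 * pi * real n * y)" for n y
  define V where "V = {\<phi> n y | n y. n \<ge> 1 \<and> y > 0}"
  have C0: "C \<ge> 0" using C[of 1] norm_ge_zero[of "a 1"] by linarith
  have bdd: "bdd_above V"
  proof (rule bdd_aboveI[of _ "C / (2 * pi)"])
    fix v assume "v \<in> V"
    then obtain n y where v: "v = \<phi> n y" "n \<ge> 1" "y > 0" unfolding V_def by blast
    have "v \<le> C * real n * y * exp (- 2 * pi * real n * y)"
      unfolding v(1) \<phi>_def using C[of n] v(3) by (intro mult_right_mono) auto
    also have "\<dots> = (C / (2 * pi)) * ((2 * pi * real n * y) * exp (- (2 * pi * real n * y)))"
      by (simp add: field_simps)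
    also have "\<dots> \<le> (C / (2 * pi)) * 1"
      using x_exp_le[of "2 * pi * real n * y"] C0 by (intro mult_left_mono) auto
    finally show "v \<le> C / (2 * pi)" by simp
  qed
  have inV: "\<phi> n y \<in> V" if "n \<ge> 1" "y > 0" for n y using that unfolding V_def by blast
  have pos1: "\<phi> 1 1 > 0" unfolding \<phi>_def using a1 by simp
  define S where "S = Sup V"
  have Sge: "\<phi> n y \<le> S" if "n \<ge> 1" "y > 0" for n y
    unfolding S_def using cSup_upper[OF inV[OF that] bdd] .
  have Spos: "S > 0" using Sge[of 1 1] pos1 by simp
  define K where "K = real l + mu / real l"
  have lpos: "real l > 0" using l by simp
  have key: "cmod lam * v \<le> K * S" if "v \<in> V" for v
  proof -
    obtain n y where v: "v = \<phi> n y" "n \<ge> 1" "y > 0" using \<open>v \<in> V\<close> unfolding V_def by blast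
    define E where "E = y * exp (- 2 * pi * real n * y)"
    have E0: "E \<ge> 0" unfolding E_def using v(3) by simp
    have "cmod lam * v = (cmod lam * cmod (a n)) * E" unfolding v(1) \<phi>_def E_def by simp
    also have "\<dots> \<le> (cmod (a (l * n)) + (if l dvd n then mu * cmod (a (n div l)) else 0)) * E"
      using rel[of n] E0 by (intro mult_right_mono) auto
    also have "\<dots> = cmod (a (l * n)) * E + (if l dvd n then mu * cmod (a (n div l)) * E else 0)"
      by (simp add: distrib_right)
    also have "\<dots> \<le> real l * S + mu / real l * S"
    proof (intro add_mono)
      have "cmod (a (l * n)) * E = real l * \<phi> (l * n) (y / real l)"
        unfolding E_def \<phi>_def using lpos by (simp add: field_simps)
      also have "\<dots> \<le> real l * S"
        using Sge[of "l * n" "y / real l"] v l lpos by (intro mult_left_mono) auto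
      finally show "cmod (a (l * n)) * E \<le> real l * S" .
      show "(if l dvd n then mu * cmod (a (n div l)) * E else 0) \<le> mu / real l * S"
      proof (cases "l dvd n")
        case True
        then obtain m where m: "n = l * m" by blast
        have m1: "m \<ge> 1" using m v(2) by (cases m) auto
        have "mu * cmod (a (n div l)) * E = mu / real l * \<phi> m (real l * y)"
          unfolding E_def \<phi>_def m using lpos l by (simp add: field_simps)
        also have "\<dots> \<le> mu / real l * S"
          using Sge[of m "real l * y"] m1 v(3) lpos mu by (intro mult_left_mono) auto
        finally show ?thesis using True by simp
      next
        case False then show ?thesis using mu Spos lpos by simp
      qed
    qed
    also have "\<dots> = K * S" unfolding K_def by (simp add: distrib_right)
    finally show ?thesis .
  qed
  show ?thesis
  proof (rule ccontr)
    assume "\<not> cmod lam \<le> real l + mu / real l"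
    then have lk: "cmod lam > K" unfolding K_def by simp
    have K0: "K \<ge> 0" unfolding K_def using mu lpos by simp
    have lam0: "cmod lam > 0" using lk K0 by linarith
    have "K * S / cmod lam < S" using lk Spos lam0 by (simp add: divide_less_eq)
    then obtain v where v: "v \<in> V" "K * S / cmod lam < v"
      using less_cSup_iff[of V] bdd inV[of 1 1] unfolding S_def by auto
    then have "K * S < cmod lam * v" using lam0 by (simp add: divide_less_eq mult.commute)
    then show False using key[OF v(1)] by simp
  qed
qed

lemma cubic_ineq:
  assumes "(L::real) \<ge> 2"
  shows "L^3 + L^2 + L \<le> L^4"
proof -
  have a: "L^4 \<ge> 2 * L^3" using assms by (simp add: power_numeral_reduce mult_right_mono)
  have b: "L^3 \<ge> 2 * L^2" using assms by (simp add: power_numeral_reduce mult_right_mono)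
  have c: "L^2 \<ge> 2 * L" using assms by (simp add: power2_eq_square mult_right_mono)
  have "L \<ge> 1" using assms by simp
  then show ?thesis using a b c by linarith
qed

lemma coeff_sq:
  fixes a :: "nat \<Rightarrow> complex" and p :: nat
  assumes a0: "a 0 = 0" and a1: "a 1 = 1"
    and Tl: "\<And>l. prime l \<Longrightarrow> l \<noteq> p \<Longrightarrow> \<exists>lam. cmod lam \<le> real l + 1 \<and>
        (\<forall>n. a (l * n) + (if l dvd n then of_nat l * a (n div l) else 0) = lam * a n)"
    and Up: "\<exists>lam. cmod lam \<le> real p \<and> (\<forall>n. a (p * n) = lam * a n)"
  shows "cmod (a n) \<le> (real n)^2"
proof (induction n rule: less_induct)
  case (less n)
  consider "n = 0" | "n = 1" | "n \<ge> 2" by linarith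
  then show ?case
  proof cases
    case 1 then show ?thesis using a0 by simp
  next
    case 2 then show ?thesis using a1 by simp
  next
    case 3
    obtain l where l: "prime l" "l dvd n" using prime_factor_nat[of n] 3 by auto
    obtain m where m: "n = l * m" using l(2) by blast
    have l2: "l \<ge> 2" using prime_ge_2_nat l(1) .
    have m1: "m \<ge> 1" using m 3 by (cases m) auto
    have mn: "m < n" using m l2 m1 by simp
    have IHm: "cmod (a m) \<le> (real m)^2" using less.IH[OF mn] .
    have rl2: "real l \<ge> 2" using l2 by simp
    show ?thesis
    proof (cases "l = p")
      case True
      obtain lam where lam: "cmod lam \<le> real p" "\<forall>n. a (p * n) = lam * a n" using Up by blast
      have "cmod (a n) = cmod lam * cmod (a m)" using lam(2) m True by (simp add: norm_mult)
      also have "\<dots> \<le> real l * (real m)^2"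
        using lam(1) IHm True by (intro mult_mono) auto
      also have "\<dots> \<le> (real l)^2 * (real m)^2"
        using rl2 by (intro mult_right_mono) (auto simp: power2_eq_square)
      also have "\<dots> = (real n)^2" using m by (simp add: power_mult_distrib)
      finally show ?thesis .
    next
      case False
      obtain lam where lam: "cmod lam \<le> real l + 1"
        "\<forall>n. a (l * n) + (if l dvd n then of_nat l * a (n div l) else 0) = lam * a n"
        using Tl[OF l(1) False] by blast
      have an: "a n = lam * a m - (if l dvd m then of_nat l * a (m div l) else 0)"
        using lam(2) m by (metis add_diff_cancel_right')
      have b1: "cmod (lam * a m) \<le> (real l + 1) * (real m)^2"
        using lam(1) IHm by (simp add: norm_mult mult_mono)
      show ?thesis
      proof (cases "l dvd m")
        case False
        have "cmod (a n) \<le> (real l + 1) * (real m)^2" using an b1 False by simp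
        also have "\<dots> \<le> (real l)^2 * (real m)^2"
        proof (intro mult_right_mono)
          have "2 * real l \<le> real l * real l" using rl2 by (intro mult_right_mono) auto
          then show "real l + 1 \<le> (real l)^2" unfolding power2_eq_square using rl2 by linarith
        qed simp
        also have "\<dots> = (real n)^2" using m by (simp add: power_mult_distrib)
        finally show ?thesis .
      next
        case True
        then obtain k where k: "m = l * k" by blast
        have k1: "k \<ge> 1" using k m1 by (cases k) auto
        have "k \<le> m" using k l2 by simp
        then have kn: "k < n" using mn by simp
        have IHk: "cmod (a k) \<le> (real k)^2" using less.IH[OF kn] .
        have mdl: "m div l = k" using k l2 by simp
        have "cmod (a n) \<le> cmod (lam * a m) + cmod (of_nat l * a k)"
          using an True mdl by (simp add: norm_triangle_ineq4)
        also have "\<dots> \<le> (real l + 1) * (real m)^2 + real l * (real k)^2"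
          using b1 mult_left_mono[OF IHk, of "real l"] by (simp add: norm_mult)
        also have "\<dots> = (real k)^2 * ((real l)^3 + (real l)^2 + real l)"
          using k by (simp add: power2_eq_square power3_eq_cube algebra_simps)
        also have "\<dots> \<le> (real k)^2 * (real l)^4"
          using cubic_ineq[OF rl2] by (intro mult_left_mono) auto
        also have "\<dots> = (real n)^2" using m k by (simp add: power2_eq_square power4_eq_xxxx)
        finally show ?thesis .
      qed
    qed
  qed
qed

context cf
begin

lemma fcoeff_sums:
  assumes "w \<in> ball 0 1"
  shows "(\<lambda>n. fcoeff f n * w ^ n) sums qexp_inf f w"
  using holomorphic_power_series[OF qinf_hol assms] by (simp add: fcoeff_def)

lemma fcoeff_0: "fcoeff f 0 = 0"
  by (simp add: fcoeff_def qinf_0)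

lemma hecke_bound: "\<exists>C. \<forall>n. cmod (fcoeff f n) \<le> C * real n"
proof -
  obtain M where M: "\<And>\<tau>. Im \<tau> > 0 \<Longrightarrow> Im \<tau> * cmod (f \<tau>) \<le> M" using M_bound by blast
  have M0: "M \<ge> 0"
  proof -
    have "1 * cmod (f \<i>) \<le> M" using M[of \<i>] by simp
    then show ?thesis using norm_ge_zero[of "f \<i>"] by linarith
  qed
  have "cmod (fcoeff f n) \<le> (2 * pi * exp 1 * M) * real n" for n
  proof (cases "n = 0")
    case True then show ?thesis by (simp add: fcoeff_0)
  next
    case False
    define \<rho> where "\<rho> = exp (- 1 / real n)"
    have \<rho>0: "\<rho> > 0" and \<rho>1: "\<rho> < 1" unfolding \<rho>_def using False by auto
    have sub: "cball 0 \<rho> \<subseteq> ball (0::complex) 1" using \<rho>1 by auto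
    have bnd: "cmod (qexp_inf f x) \<le> 2 * pi * real n * M" if "cmod (0 - x) = \<rho>" for x
    proof -
      have x0: "x \<noteq> 0" and x1: "cmod x < 1" using that \<rho>0 \<rho>1 by auto
      have imx: "Im (lg x) = 1 / (2 * pi * real n)"
        using Im_lg[OF x0] that unfolding \<rho>_def by simp
      have ip: "Im (lg x) > 0" using lg_uhp[OF x0 x1] .
      have "qexp_inf f x = f (lg x)" using qinf_e[OF ip] ee_lg[OF x0] by simp
      moreover have "Im (lg x) * cmod (f (lg x)) \<le> M" using M[OF ip] .
      ultimately show ?thesis using imx False by (simp add: field_simps)
    qed
    have "cmod ((deriv ^^ n) (qexp_inf f) 0) \<le> fact n * (2 * pi * real n * M) / \<rho> ^ n"
      by (rule Cauchy_inequality[OF holomorphic_on_subset[OF qinf_hol] _ \<rho>0 bnd])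
         (use sub holomorphic_on_imp_continuous_on[OF qinf_hol] continuous_on_subset in auto)
    moreover have "\<rho> ^ n = exp (-1)" unfolding \<rho>_def using False by (simp add: exp_of_nat_mult[symmetric])
    ultimately have "cmod ((deriv ^^ n) (qexp_inf f) 0) \<le> fact n * (2 * pi * real n * M) * exp 1"
      by (simp add: exp_minus field_simps)
    then show ?thesis unfolding fcoeff_def by (simp add: norm_divide field_simps)
  qed
  then show ?thesis by blast
qed

end

locale cfe = cf +
  assumes eig: "hecke_eigenform p f" and a1: "fcoeff f 1 = 1"
begin

lemma eig_T:
  assumes "prime l" "l \<noteq> p"
  shows "\<exists>ev. \<forall>n. fcoeff f (l * n) + (if l dvd n then of_nat l * fcoeff f (n div l) else 0) = ev * fcoeff f n"
proof -
  have "\<not> l dvd p" using assms primes_dvd_imp_eq prime_p by blast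
  obtain ev where "\<forall>n. hecke_coeff p l (fcoeff f) n = ev * fcoeff f n"
    using eig assms(1) unfolding hecke_eigenform_def by blast
  then have "\<forall>n. fcoeff f (l * n) + (if l dvd n then of_nat l * fcoeff f (n div l) else 0) = ev * fcoeff f n"
    using \<open>\<not> l dvd p\<close> unfolding hecke_coeff_def by simp
  then show ?thesis by blast
qed

lemma eig_U: "\<exists>ev. \<forall>n. fcoeff f (p * n) = ev * fcoeff f n"
proof -
  obtain ev where "\<forall>n. hecke_coeff p p (fcoeff f) n = ev * fcoeff f n"
    using eig prime_p unfolding hecke_eigenform_def by blast
  then have "\<forall>n. fcoeff f (p * n) = ev * fcoeff f n" unfolding hecke_coeff_def by simp
  then show ?thesis by blast
qed

lemma coeff_bound: "cmod (fcoeff f n) \<le> (real n)^2"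
proof (rule coeff_sq[where p = p])
  obtain C where C: "\<And>n. cmod (fcoeff f n) \<le> C * real n" using hecke_bound by blast
  show "fcoeff f 0 = 0" by (rule fcoeff_0)
  show "fcoeff f 1 = 1" by (rule a1)
  fix l :: nat assume l: "prime l" "l \<noteq> p"
  obtain ev where ev: "\<forall>n. fcoeff f (l * n) + (if l dvd n then of_nat l * fcoeff f (n div l) else 0) = ev * fcoeff f n"
    using eig_T[OF l] by blast
  have "cmod ev \<le> real l + real l / real l"
  proof (rule eig_bound[where a = "fcoeff f" and C = C])
    show "\<And>n. cmod (fcoeff f n) \<le> C * real n" by (rule C)
    show "l \<ge> 1" using l prime_ge_1_nat by blast
    show "fcoeff f 1 \<noteq> 0" using a1 by simp
    show "real l \<ge> 0" by simp
    fix n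
    have "cmod ev * cmod (fcoeff f n) = cmod (fcoeff f (l * n) + (if l dvd n then of_nat l * fcoeff f (n div l) else 0))"
      using ev by (simp add: norm_mult)
    also have "\<dots> \<le> cmod (fcoeff f (l * n)) + cmod (if l dvd n then of_nat l * fcoeff f (n div l) else 0)"
      by (rule norm_triangle_ineq)
    also have "\<dots> = cmod (fcoeff f (l * n)) + (if l dvd n then real l * cmod (fcoeff f (n div l)) else 0)"
      by (simp add: norm_mult)
    finally show "cmod ev * cmod (fcoeff f n) \<le> cmod (fcoeff f (l * n)) + (if l dvd n then real l * cmod (fcoeff f (n div l)) else 0)" .
  qed
  moreover have "real l / real l = 1" using l prime_gt_0_nat by simp
  ultimately show "\<exists>lam. cmod lam \<le> real l + 1 \<and>
        (\<forall>n. fcoeff f (l * n) + (if l dvd n then of_nat l * fcoeff f (n div l) else 0) = lam * fcoeff f n)"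
    using ev by auto
next
  obtain C where C: "\<And>n. cmod (fcoeff f n) \<le> C * real n" using hecke_bound by blast
  obtain ev where ev: "\<forall>n. fcoeff f (p * n) = ev * fcoeff f n" using eig_U by blast
  have "cmod ev \<le> real p + 0 / real p"
  proof (rule eig_bound[where a = "fcoeff f" and C = C])
    show "\<And>n. cmod (fcoeff f n) \<le> C * real n" by (rule C)
    show "p \<ge> 1" using p_pos by simp
    show "fcoeff f 1 \<noteq> 0" using a1 by simp
    fix n
    show "cmod ev * cmod (fcoeff f n) \<le> cmod (fcoeff f (p * n)) + (if p dvd n then 0 * cmod (fcoeff f (n div p)) else 0)"
      using ev by (simp add: norm_mult)
  qed simp
  then show "\<exists>lam. cmod lam \<le> real p \<and> (\<forall>n. fcoeff f (p * n) = lam * fcoeff f n)" using ev by auto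
qed

lemma Up_bound: "\<exists>ev. cmod ev \<le> real p \<and> (\<forall>n. fcoeff f (p * n) = ev * fcoeff f n)"
proof -
  obtain C where C: "\<And>n. cmod (fcoeff f n) \<le> C * real n" using hecke_bound by blast
  obtain ev where ev: "\<forall>n. fcoeff f (p * n) = ev * fcoeff f n" using eig_U by blast
  have "cmod ev \<le> real p + 0 / real p"
  proof (rule eig_bound[where a = "fcoeff f" and C = C])
    show "\<And>n. cmod (fcoeff f n) \<le> C * real n" by (rule C)
    show "p \<ge> 1" using p_pos by simp
    show "fcoeff f 1 \<noteq> 0" using a1 by simp
    fix n
    show "cmod ev * cmod (fcoeff f n) \<le> cmod (fcoeff f (p * n)) + (if p dvd n then 0 * cmod (fcoeff f (n div p)) else 0)"
      using ev by (simp add: norm_mult)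
  qed simp
  then show ?thesis using ev by auto
qed

end


lemma reduction45:
  assumes "Im z > 0"
  shows "\<exists>w\<in>orb z. \<bar>Re w\<bar> \<le> 1/2 \<and> Im w \<ge> 4/5"
proof -
  obtain w where w: "w \<in> orb z" "\<bar>Re w\<bar> \<le> 1/2" "(Im w)^2 \<ge> 3/4" using reduction[OF assms] by blast
  have wpos: "Im w > 0" using orb_Im_pos[OF assms w(1)] .
  have "Im w \<ge> 4/5"
  proof (rule ccontr)
    assume "\<not> ?thesis"
    then have "Im w < 4/5" by simp
    then have "(Im w)^2 < (4/5)^2" using wpos by (intro power_strict_mono) auto
    then show False using w(3) by (simp add: power2_eq_square)
  qed
  then show ?thesis using w by blast
qed

lemma ee_deriv: "N > 0 \<Longrightarrow> ((\<lambda>\<tau>. ee (\<tau> / of_nat N)) has_field_derivative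
    (2 * of_real pi * \<i> / of_nat N) * ee (\<tau> / of_nat N)) (at \<tau>)"
  unfolding ee_def by (auto intro!: derivative_eq_intros simp: field_simps)

lemma norm_ee_lt1: "Im \<tau> > 0 \<Longrightarrow> (N::nat) > 0 \<Longrightarrow> cmod (ee (\<tau> / of_nat N)) < 1"
  by (simp add: norm_ee)

lemma uhp_open: "open {z::complex. Im z > 0}"
  by (intro open_Collect_less continuous_intros)

lemma level_one_zero:
  fixes g k :: "complex \<Rightarrow> complex" and N :: nat
  assumes N: "N > 0"
    and T: "\<And>\<tau>. Im \<tau> > 0 \<Longrightarrow> g (\<tau> + 1) = g \<tau>"
    and S: "\<And>\<tau>. Im \<tau> > 0 \<Longrightarrow> g (-1/\<tau>) = \<tau>^2 * g \<tau>"
    and kh: "k holomorphic_on ball 0 1" and k0: "k 0 = 0"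
    and ke: "\<And>\<tau>. Im \<tau> > 0 \<Longrightarrow> g \<tau> = k (ee (\<tau> / of_nat N))"
    and t: "Im \<tau> > 0"
  shows "g \<tau> = 0"
proof -
  define H where "H = {z::complex. Im z > 0}"
  have Ho: "open H" unfolding H_def by (rule uhp_open)
  have Hc: "convex H" unfolding H_def by (rule convex_halfspace_Im_gt)
  have Hconn: "connected H" unfolding H_def by blast
  define k1 where "k1 w = (if w = 0 then deriv k 0 else k w / w)" for w
  have "(\<lambda>z. if z = 0 then deriv k 0 else (k z - k 0) / (z - 0)) holomorphic_on ball 0 1"
    by (rule pole_lemma[OF kh]) (simp add: interior_open)
  moreover have "(\<lambda>z. if z = 0 then deriv k 0 else (k z - k 0) / (z - 0)) = k1"
    unfolding k1_def using k0 by auto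
  ultimately have k1h: "k1 holomorphic_on ball 0 1" by simp
  obtain K where K: "\<And>x. x \<in> ball 0 1 \<Longrightarrow> (K has_field_derivative k1 x) (at x within ball 0 1)"
    using holomorphic_convex_primitive'[OF convex_ball open_ball k1h] by blast
  have K': "(K has_field_derivative k1 x) (at x)" if "x \<in> ball 0 1" for x
    using K[OF that] at_within_open[OF that open_ball] by simp
  define c where "c = of_nat N / (2 * of_real pi * \<i>)"
  have c0: "c \<noteq> 0" unfolding c_def using N by simp
  define \<Phi> where "\<Phi> \<tau> = c * (K (ee (\<tau> / of_nat N)) - K 0)" for \<tau>
  have eeb: "ee (\<tau> / of_nat N) \<in> ball 0 1" if "Im \<tau> > 0" for \<tau>
    using norm_ee_lt1[OF that N] by simp
  have d\<Phi>: "(\<Phi> has_field_derivative g \<tau>) (at \<tau>)" if "Im \<tau> > 0" for \<tau>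
  proof -
    define w where "w = ee (\<tau> / of_nat N)"
    have w0: "w \<noteq> 0" unfolding w_def by (rule ee_nz)
    have "((\<lambda>\<tau>. K (ee (\<tau> / of_nat N))) has_field_derivative k1 w * ((2 * of_real pi * \<i> / of_nat N) * w)) (at \<tau>)"
      unfolding w_def by (rule DERIV_chain2[OF K'[OF eeb[OF that]] ee_deriv[OF N]])
    then have "(\<Phi> has_field_derivative c * (k1 w * ((2 * of_real pi * \<i> / of_nat N) * w) - 0)) (at \<tau>)"
      unfolding \<Phi>_def by (rule DERIV_cmult[OF DERIV_diff[OF _ DERIV_const]])
    moreover have "c * (k1 w * ((2 * of_real pi * \<i> / of_nat N) * w) - 0) = k w"
      unfolding c_def k1_def using w0 N by (simp add: field_simps)
    moreover have "k w = g \<tau>" unfolding w_def using ke[OF that] by simp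
    ultimately show ?thesis by simp
  qed
  have "\<forall>x\<in>H. \<exists>f'. (\<Phi> has_field_derivative f') (at x)" using d\<Phi> unfolding H_def by blast
  then have \<Phi>hol: "\<Phi> holomorphic_on H" using holomorphic_on_open[OF Ho] by blast
  have \<Phi>cont: "continuous_on H \<Phi>" using holomorphic_on_imp_continuous_on[OF \<Phi>hol] .
  obtain c1 where c1: "\<And>x. x \<in> H \<Longrightarrow> \<Phi> (x + 1) - \<Phi> x = c1"
  proof -
    have "\<exists>c. \<forall>x\<in>H. \<Phi> (x + 1) - \<Phi> x = c"
    proof (rule has_field_derivative_zero_constant[OF Hc])
      fix x assume x: "x \<in> H"
      then have x1: "Im (x + 1) > 0" unfolding H_def by simp
      have "((\<lambda>x. \<Phi> (x + 1) - \<Phi> x) has_field_derivative g (x + 1) * 1 - g x) (at x)"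
      proof -
        have d1: "((\<lambda>x. x + 1) has_field_derivative 1) (at x)" by (auto intro!: derivative_eq_intros)
        have "((\<lambda>x. \<Phi> (x + 1)) has_field_derivative g (x + 1) * 1) (at x)"
          using DERIV_chain2[where g = "\<lambda>x. x + 1", OF d\<Phi>[OF x1] d1] by simp
        moreover have "(\<Phi> has_field_derivative g x) (at x)" using d\<Phi> x unfolding H_def by simp
        ultimately show ?thesis by (rule DERIV_diff)
      qed
      then show "((\<lambda>x. \<Phi> (x + 1) - \<Phi> x) has_field_derivative 0) (at x within H)"
        using T[of x] x unfolding H_def by (auto intro: has_field_derivative_at_within)
    qed
    then show ?thesis using that by blast
  qed
  have shiftn: "\<Phi> (x + of_nat n) = \<Phi> x + of_nat n * c1" if "x \<in> H" for x n
  proof (induction n)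
    case 0 then show ?case by simp
  next
    case (Suc n)
    have "x + of_nat n \<in> H" using that unfolding H_def by simp
    then have "\<Phi> (x + of_nat n + 1) = \<Phi> (x + of_nat n) + c1" using c1 by force
    then show ?case using Suc by (simp add: algebra_simps)
  qed
  have "c1 = 0"
  proof -
    have iH: "\<i> \<in> H" unfolding H_def by simp
    have "ee ((\<i> + of_nat N) / of_nat N) = ee (\<i> / of_nat N)"
      using N by (simp add: add_divide_distrib ee_add ee_1)
    then have "\<Phi> (\<i> + of_nat N) = \<Phi> \<i>" unfolding \<Phi>_def by simp
    then have "of_nat N * c1 = 0" using shiftn[OF iH, of N] by simp
    then show ?thesis using N by simp
  qed
  then have \<Phi>T: "\<Phi> (x + 1) = \<Phi> x" if "x \<in> H" for x using c1[OF that] by simp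
  obtain c2 where c2: "\<And>x. x \<in> H \<Longrightarrow> \<Phi> (-1/x) - \<Phi> x = c2"
  proof -
    have "\<exists>c. \<forall>x\<in>H. \<Phi> (-1/x) - \<Phi> x = c"
    proof (rule has_field_derivative_zero_constant[OF Hc])
      fix x assume x: "x \<in> H"
      then have x0: "x \<noteq> 0" unfolding H_def by auto
      have x1: "Im (-1/x) > 0" using x x0 Im_neg_inv[of x] unfolding H_def by simp
      have dinv: "((\<lambda>x. -1/x) has_field_derivative 1 / x^2) (at x)"
        using x0 by (auto intro!: derivative_eq_intros simp: power2_eq_square field_simps)
      have "((\<lambda>x. \<Phi> (-1/x) - \<Phi> x) has_field_derivative g (-1/x) * (1 / x^2) - g x) (at x)"
      proof -
        have "((\<lambda>x. \<Phi> (-1/x)) has_field_derivative g (-1/x) * (1 / x^2)) (at x)"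
          using DERIV_chain2[where g = "\<lambda>x. -1/x", OF d\<Phi>[OF x1] dinv] by simp
        moreover have "(\<Phi> has_field_derivative g x) (at x)" using d\<Phi> x unfolding H_def by simp
        ultimately show ?thesis by (rule DERIV_diff)
      qed
      moreover have "g (-1/x) * (1 / x^2) - g x = 0" using S[of x] x x0 unfolding H_def by (simp add: field_simps)
      ultimately show "((\<lambda>x. \<Phi> (-1/x) - \<Phi> x) has_field_derivative 0) (at x within H)"
        by (auto intro: has_field_derivative_at_within)
    qed
    then show ?thesis using that by blast
  qed
  have "c2 = 0" using c2[of \<i>] unfolding H_def by simp
  then have \<Phi>S: "\<Phi> (-1/x) = \<Phi> x" if "x \<in> H" for x using c2[OF that] by simp
  have orb\<Phi>: "\<Phi> w = \<Phi> z" if "z \<in> H" "w \<in> orb z" for z w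
    using that(2)
  proof induction
    case base then show ?case by simp
  next
    case (plus w)
    have "w \<in> H" using orb_Im_pos plus.hyps that(1) unfolding H_def by blast
    then show ?case using \<Phi>T plus.IH by simp
  next
    case (minus w)
    have "w - 1 \<in> H" using orb_Im_pos orb.minus[OF minus.hyps] that(1) unfolding H_def by blast
    then have "\<Phi> (w - 1 + 1) = \<Phi> (w - 1)" using \<Phi>T by blast
    then show ?case using minus.IH by simp
  next
    case (inv w)
    have "w \<in> H" using orb_Im_pos inv.hyps that(1) unfolding H_def by blast
    then show ?case using \<Phi>S inv.IH by simp
  qed
  have lim: "\<exists>Y\<ge>1. \<forall>z. Im z \<ge> Y \<longrightarrow> cmod (\<Phi> z) < e" if e: "e > 0" for e
  proof -
    have "isCont K 0" using K'[of 0] DERIV_isCont by simp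
    then have "\<forall>e>0. \<exists>d>0. \<forall>x. dist x 0 < d \<longrightarrow> dist (K x) (K 0) < e"
      by (simp add: continuous_at_eps_delta)
    moreover have "e / cmod c > 0" using e c0 by simp
    ultimately obtain d where d: "d > 0" "\<And>x. dist x 0 < d \<Longrightarrow> dist (K x) (K 0) < e / cmod c"
      by blast
    define Y where "Y = real N * (\<bar>ln d\<bar> + 1) / (2 * pi) + 1"
    have Y1: "Y \<ge> 1" unfolding Y_def using N by simp
    show ?thesis
    proof (intro exI[of _ Y] conjI allI impI Y1)
      fix z assume z: "Im z \<ge> Y"
      have "cmod (ee (z / of_nat N)) = exp (- 2 * pi * Im z / real N)" by (simp add: norm_ee)
      also have "\<dots> \<le> exp (- (\<bar>ln d\<bar> + 1))"
      proof -
        have "2 * pi * Im z / real N \<ge> 2 * pi * (real N * (\<bar>ln d\<bar> + 1) / (2 * pi)) / real N"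
          using z Y_def N by (intro divide_right_mono mult_left_mono) auto
        then have "2 * pi * Im z / real N \<ge> \<bar>ln d\<bar> + 1" using N by simp
        then show ?thesis by simp
      qed
      also have "\<dots> < exp (ln d)" by simp
      also have "\<dots> = d" using d by simp
      finally have "dist (ee (z / of_nat N)) 0 < d" by simp
      then have "cmod (K (ee (z / of_nat N)) - K 0) < e / cmod c" using d(2) by (simp add: dist_norm)
      then have "cmod c * cmod (K (ee (z / of_nat N)) - K 0) < e" using c0 by (simp add: field_simps)
      then show "cmod (\<Phi> z) < e" unfolding \<Phi>_def by (simp add: norm_mult)
    qed
  qed
  have zero: "\<Phi> z0 = 0" if z0: "z0 \<in> H" for z0
  proof (rule ccontr)
    assume nz: "\<Phi> z0 \<noteq> 0"
    define e where "e = cmod (\<Phi> z0)"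
    have e0: "e > 0" unfolding e_def using nz by simp
    obtain Y where Y: "Y \<ge> 1" "\<And>z. Im z \<ge> Y \<Longrightarrow> cmod (\<Phi> z) < e" using lim[OF e0] by blast
    define R where "R = {z. \<bar>Re z\<bar> \<le> 1/2 \<and> 4/5 \<le> Im z \<and> Im z \<le> Y}"
    have RH: "R \<subseteq> H" unfolding R_def H_def by auto
    have rep: "\<exists>w. \<Phi> w = \<Phi> z \<and> \<bar>Re w\<bar> \<le> 1/2 \<and> Im w \<ge> 4/5" if zH: "z \<in> H" for z
    proof -
      obtain w where "w \<in> orb z" "\<bar>Re w\<bar> \<le> 1/2" "Im w \<ge> 4/5"
        using reduction45 zH unfolding H_def by blast
      then show ?thesis using orb\<Phi>[OF zH] by blast
    qed
    obtain w0 where w0: "\<Phi> w0 = \<Phi> z0" "\<bar>Re w0\<bar> \<le> 1/2" "Im w0 \<ge> 4/5" using rep[OF z0] by blast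
    have "Im w0 < Y"
    proof (rule ccontr)
      assume "\<not> ?thesis"
      then have "cmod (\<Phi> w0) < e" using Y(2) by simp
      then show False using w0(1) unfolding e_def by simp
    qed
    then have w0R: "w0 \<in> R" unfolding R_def using w0 by simp
    have cR: "compact R"
    proof (rule compact_eq_bounded_closed[THEN iffD2], rule conjI)
      show "closed R" unfolding R_def
        by (intro closed_Collect_conj closed_Collect_le continuous_intros)
      have "R \<subseteq> cball 0 (1/2 + Y)"
      proof
        fix z assume "z \<in> R"
        then have "\<bar>Re z\<bar> \<le> 1/2" "\<bar>Im z\<bar> \<le> Y" unfolding R_def by auto
        then show "z \<in> cball 0 (1/2 + Y)" using cmod_le[of z] by simp
      qed
      then show "bounded R" using bounded_cball bounded_subset by blast
    qed
    have "continuous_on R (\<lambda>z. cmod (\<Phi> z))"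
      using continuous_on_subset[OF \<Phi>cont RH] by (intro continuous_intros)
    then obtain \<xi> where \<xi>: "\<xi> \<in> R" "\<And>y. y \<in> R \<Longrightarrow> cmod (\<Phi> y) \<le> cmod (\<Phi> \<xi>)"
      using continuous_attains_sup[OF cR] w0R by blast
    have \<xi>e: "cmod (\<Phi> \<xi>) \<ge> e" using \<xi>(2)[OF w0R] w0(1) unfolding e_def by simp
    have "\<Phi> constant_on H"
    proof (rule maximum_modulus_principle[OF \<Phi>hol Ho Hconn Ho order_refl])
      show "\<xi> \<in> H" using \<xi>(1) RH by blast
      fix z assume z: "z \<in> H"
      obtain w where w: "\<Phi> w = \<Phi> z" "\<bar>Re w\<bar> \<le> 1/2" "Im w \<ge> 4/5" using rep[OF z] by blast
      show "cmod (\<Phi> z) \<le> cmod (\<Phi> \<xi>)"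
      proof (cases "Im w \<le> Y")
        case True
        then have "w \<in> R" unfolding R_def using w by simp
        then show ?thesis using \<xi>(2)[of w] w(1) by simp
      next
        case False
        then have "cmod (\<Phi> w) < e" using Y(2) by simp
        then show ?thesis using w(1) \<xi>e by simp
      qed
    qed
    then obtain cc where cc: "\<And>x. x \<in> H \<Longrightarrow> \<Phi> x = cc" unfolding constant_on_def by blast
    define z1 where "z1 = of_real Y * \<i>"
    have z1H: "z1 \<in> H" unfolding z1_def H_def using Y(1) by simp
    have "cmod (\<Phi> z1) < e" using Y(2)[of z1] unfolding z1_def by simp
    moreover have "\<Phi> z1 = \<Phi> z0" using cc[OF z1H] cc[OF z0] by simp
    ultimately show False unfolding e_def by simp
  qed
  have tH: "\<tau> \<in> H" unfolding H_def using t by simp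
  have "((\<lambda>x. 0) has_field_derivative g \<tau>) (at \<tau>)"
    by (rule has_field_derivative_transform_within_open[OF d\<Phi>[OF t] Ho tH]) (use zero in auto)
  then show ?thesis using DERIV_const DERIV_unique by blast
qed


section \<open>Number theory for the coset permutation\<close>

lemma inv_exists:
  assumes pp: "prime (p::nat)" and j: "j \<in> {1..<p}"
  shows "\<exists>k\<in>{1..<p}. p dvd j * k + 1"
proof -
  have j0: "j \<noteq> 0" and jp: "j < p" using j by auto
  have "\<not> p dvd j" using j0 jp by (meson dvd_imp_le not_le neq0_conv)
  then have "coprime p j" using prime_imp_coprime_nat[OF pp] by blast
  then have g: "gcd j p = 1" by (simp add: coprime_iff_gcd_eq_1 gcd.commute)
  obtain x y where xy: "j * x = p * y + 1" using bezout_nat[OF j0, of p] g by auto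
  define k where "k = ((p - 1) * x) mod p"
  have p1: "p \<ge> 1" using prime_ge_1_nat[OF pp] .
  obtain q where q: "p = Suc q" using p1 by (cases p) auto
  have "(j * k + 1) mod p = (j * ((p - 1) * x) + 1) mod p"
    unfolding k_def by (metis mod_add_left_eq mod_mult_right_eq)
  also have "j * ((p - 1) * x) + 1 = q * (j * x) + 1" using q by (simp add: algebra_simps)
  also have "\<dots> = q * (p * y + 1) + 1" using xy by simp
  also have "\<dots> = p * (q * y + 1)" using q by (simp add: algebra_simps)
  finally have dv: "p dvd j * k + 1" by (simp add: mod_eq_0_iff_dvd)
  have "k \<noteq> 0"
  proof
    assume "k = 0"
    then have "p dvd 1" using dv by simp
    then show False using pp by (metis not_prime_1 nat_dvd_1_iff_1)
  qed
  moreover have "k < p" unfolding k_def using p1 by simp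
  ultimately show ?thesis using dv by auto
qed

lemma inv_unique:
  assumes pp: "prime (p::nat)" and j: "j \<in> {1..<p}" and k: "k \<in> {1..<p}" and k': "k' \<in> {1..<p}"
    and d: "p dvd j * k + 1" and d': "p dvd j * k' + 1"
  shows "k = k'"
proof -
  have nj: "\<not> p dvd j" using j by (meson atLeastLessThan_iff dvd_imp_le not_le not_one_le_zero le_trans)
  have main: "k1 = k2" if "k2 \<le> k1" "k1 \<in> {1..<p}" "k2 \<in> {1..<p}" "p dvd j * k1 + 1" "p dvd j * k2 + 1" for k1 k2
  proof -
    have "p dvd (j * k1 + 1) - (j * k2 + 1)" using that(4,5) dvd_diff_nat by blast
    moreover have "(j * k1 + 1) - (j * k2 + 1) = j * (k1 - k2)" by (simp add: diff_mult_distrib2)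
    ultimately have "p dvd j * (k1 - k2)" by simp
    then have "p dvd (k1 - k2)" using nj prime_dvd_mult_iff[OF pp] by blast
    moreover have "k1 - k2 < p" using that(2) by auto
    ultimately have "k1 - k2 = 0" by (meson dvd_imp_le not_le neq0_conv)
    then show ?thesis using that(1) by simp
  qed
  show ?thesis
  proof (cases "k' \<le> k")
    case True then show ?thesis using main[of k' k] k k' d d' by blast
  next
    case False then show ?thesis using main[of k k'] k k' d d' by simp
  qed
qed

definition pinv :: "nat \<Rightarrow> nat \<Rightarrow> nat" where
  "pinv p j = (SOME k. k \<in> {1..<p} \<and> p dvd j * k + 1)"

lemma pinv_prop:
  assumes "prime p" "j \<in> {1..<p}"
  shows "pinv p j \<in> {1..<p} \<and> p dvd j * pinv p j + 1"
  unfolding pinv_def using someI_ex[of "\<lambda>k. k \<in> {1..<p} \<and> p dvd j * k + 1"] inv_exists[OF assms] by blast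

lemma pinv_pinv:
  assumes "prime p" "j \<in> {1..<p}"
  shows "pinv p (pinv p j) = j"
proof -
  have a: "pinv p j \<in> {1..<p}" "p dvd j * pinv p j + 1" using pinv_prop[OF assms] by auto
  have b: "pinv p (pinv p j) \<in> {1..<p}" "p dvd pinv p j * pinv p (pinv p j) + 1" using pinv_prop[OF assms(1) a(1)] by auto
  have c: "p dvd pinv p j * j + 1" using a(2) by (simp add: mult.commute)
  show ?thesis using inv_unique[OF assms(1) a(1) b(1) assms(2) b(2) c] .
qed

lemma sum_pinv:
  assumes "prime p"
  shows "(\<Sum>j\<in>{1..<p}. h (pinv p j)) = (\<Sum>k\<in>{1..<p}. (h k :: complex))"
  by (rule sum.reindex_bij_witness[where i = "pinv p" and j = "pinv p"])
     (use pinv_prop[OF assms] pinv_pinv[OF assms] in auto)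

section \<open>Roots of unity filter\<close>

lemma ee_nat_mult: "ee (of_nat n * z) = ee z ^ n"
proof -
  have "ee (of_nat n * z) = exp (of_nat n * (2 * of_real pi * \<i> * z))" by (simp add: ee_def algebra_simps)
  also have "\<dots> = ee z ^ n" by (simp add: exp_of_nat_mult ee_def)
  finally show ?thesis .
qed

lemma root_sum:
  assumes p: "(p::nat) > 0"
  shows "(\<Sum>j<p. ee (of_nat n / of_nat p) ^ j) = (if p dvd n then of_nat p else 0)"
proof (cases "p dvd n")
  case True
  then obtain m where m: "n = p * m" by blast
  have "ee (of_nat n / of_nat p) = ee (of_int (int m))" using p m by simp
  also have "\<dots> = 1" by (rule ee_int)
  finally show ?thesis using True by simp
next
  case False
  define z where "z = ee (of_nat n / of_nat p)"
  have z1: "z \<noteq> 1"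
  proof
    assume "z = 1"
    then have "ee (of_nat n / of_nat p) = ee 0" unfolding z_def by (simp add: ee_def)
    then obtain k :: int where "of_nat n / of_nat p = (0::complex) + of_int k" using exp_2pi_eq by blast
    then have "(of_nat n :: complex) = of_nat p * of_int k" using p by (simp add: field_simps)
    then have "int n = int p * k" by (metis of_int_eq_iff of_int_mult of_int_of_nat_eq)
    then have "int p dvd int n" by simp
    then show False using False by simp
  qed
  have "z ^ p = ee (of_nat p * (of_nat n / of_nat p))" unfolding z_def by (rule ee_nat_mult[symmetric])
  also have "\<dots> = ee (of_int (int n))" using p by simp
  also have "\<dots> = 1" by (rule ee_int)
  finally have zp: "z ^ p = 1" .
  show ?thesis using z1 zp False unfolding z_def[symmetric] by (simp add: sum_gp_strict)
qed

lemma filter_sums: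
  assumes Bh: "B holomorphic_on ball 0 1" and p: "(p::nat) > 0" and w: "cmod w < 1"
  shows "(\<lambda>m. of_nat p * ((deriv ^^ (p * m)) B 0 / fact (p * m)) * w ^ (p * m)) sums
         (\<Sum>j<p. B (ee (of_nat j / of_nat p) * w))"
proof -
  define \<beta> where "\<beta> n = (deriv ^^ n) B 0 / fact n" for n
  have each: "(\<lambda>n. \<beta> n * (ee (of_nat j / of_nat p) * w) ^ n) sums B (ee (of_nat j / of_nat p) * w)" for j
  proof -
    have "cmod (ee (of_nat j / of_nat p) * w) = cmod w" by (simp add: norm_mult norm_ee)
    then have "ee (of_nat j / of_nat p) * w \<in> ball 0 1" using w by simp
    from holomorphic_power_series[OF Bh this] show ?thesis unfolding \<beta>_def by simp
  qed
  have "(\<lambda>n. \<Sum>j<p. \<beta> n * (ee (of_nat j / of_nat p) * w) ^ n) sums (\<Sum>j<p. B (ee (of_nat j / of_nat p) * w))"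
    by (rule sums_sum) (use each in blast)
  moreover have "(\<Sum>j<p. \<beta> n * (ee (of_nat j / of_nat p) * w) ^ n) =
      (if p dvd n then of_nat p * \<beta> n * w ^ n else 0)" for n
  proof -
    have "(\<Sum>j<p. \<beta> n * (ee (of_nat j / of_nat p) * w) ^ n) = \<beta> n * w ^ n * (\<Sum>j<p. ee (of_nat n / of_nat p) ^ j)"
    proof -
      have "ee (of_nat j / of_nat p) ^ n = ee (of_nat n / of_nat p) ^ j" for j
      proof -
        have "ee (of_nat j / of_nat p) ^ n = ee (of_nat n * (of_nat j / of_nat p))" by (rule ee_nat_mult[symmetric])
        also have "of_nat n * (of_nat j / of_nat p) = of_nat j * (of_nat n / (of_nat p :: complex))" by simp
        also have "ee \<dots> = ee (of_nat n / of_nat p) ^ j" by (rule ee_nat_mult)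
        finally show ?thesis .
      qed
      then show ?thesis by (simp add: sum_distrib_left power_mult_distrib algebra_simps)
    qed
    then show ?thesis using root_sum[OF p, of n] by simp
  qed
  ultimately have s: "(\<lambda>n. if p dvd n then of_nat p * \<beta> n * w ^ n else 0) sums (\<Sum>j<p. B (ee (of_nat j / of_nat p) * w))"
    by simp
  have sm: "strict_mono (\<lambda>m. p * m)" using p by (simp add: strict_mono_def)
  have "(\<lambda>m. (\<lambda>n. if p dvd n then of_nat p * \<beta> n * w ^ n else 0) (p * m)) sums (\<Sum>j<p. B (ee (of_nat j / of_nat p) * w))"
    by (rule sums_mono_reindex[OF sm, THEN iffD2, OF _ s]) auto
  then show ?thesis unfolding \<beta>_def by simp
qed

lemma coeff_zero_from_sums:
  fixes c :: "nat \<Rightarrow> complex"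
  assumes p: "(p::nat) > 0" and s: "\<And>w. w \<in> ball 0 1 \<Longrightarrow> (\<lambda>m. c m * w ^ (p * m)) sums 0"
  shows "c m = 0"
proof -
  define C where "C = Abs_fps (\<lambda>n. if p dvd n then c (n div p) else 0)"
  have sm: "strict_mono (\<lambda>m. p * m)" using p by (simp add: strict_mono_def)
  have sC: "(\<lambda>n. fps_nth C n * w ^ n) sums 0" if "w \<in> ball 0 1" for w
  proof -
    have a: "(\<lambda>m. (\<lambda>n. fps_nth C n * w ^ n) (p * m)) sums 0"
      using s[OF that] p unfolding C_def by simp
    have z: "\<And>n. n \<notin> range (\<lambda>m. p * m) \<Longrightarrow> fps_nth C n * w ^ n = 0" by (auto simp: C_def)
    show ?thesis using sums_mono_reindex[of "\<lambda>m. p * m" "\<lambda>n. fps_nth C n * w ^ n" 0, OF sm z] a by simp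
  qed
  have "(\<lambda>w. 0::complex) has_fps_expansion C"
  proof (rule has_fps_expansionI)
    have "\<forall>\<^sub>F w in nhds 0. w \<in> ball (0::complex) 1"
      by (rule eventually_nhds_in_open) auto
    then show "\<forall>\<^sub>F u in nhds 0. (\<lambda>n. fps_nth C n * u ^ n) sums 0"
      by eventually_elim (rule sC)
  qed
  then have "fps_nth C (p * m) = (deriv ^^ (p * m)) (\<lambda>w. 0) 0 / fact (p * m)"
    by (rule fps_nth_fps_expansion)
  then show ?thesis unfolding C_def using p by simp
qed


lemma sum_split0:
  assumes "(p::nat) > 0"
  shows "(\<Sum>j<p. f j) = f 0 + (\<Sum>j\<in>{1..<p}. (f j :: complex))"
proof -
  have "{..<p} = insert 0 {1..<p}" using assms by auto
  then show ?thesis by simp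
qed

lemma div_div_cancel: "(c::complex) \<noteq> 0 \<Longrightarrow> (a / c) / (b / c) = a / b"
  by (cases "b = 0") (simp_all add: field_simps)

lemma sq_ratio:
  assumes "(a::complex) \<noteq> 0" "c \<noteq> 0"
  shows "y * (a / b)^2 / (a / c)^2 = c^2 * (y / b^2)"
proof -
  have r: "(a / b) / (a / c) = c / b" using assms by (cases "b = 0") (simp_all add: field_simps)
  have "y * (a / b)^2 / (a / c)^2 = y * ((a / b) / (a / c))^2" by (simp add: power_divide)
  also have "\<dots> = c^2 * (y / b^2)" unfolding r by (simp add: power_divide)
  finally show ?thesis .
qed

lemma trace_coeff:
  fixes u A B :: "complex \<Rightarrow> complex" and p :: nat
  assumes pp: "prime p"
    and inv: "\<And>a b c d \<tau>. a * d - b * c = 1 \<Longrightarrow> int p dvd c \<Longrightarrow> Im \<tau> > 0 \<Longrightarrow> slash2 u a b c d \<tau> = u \<tau>"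
    and Ah: "A holomorphic_on ball 0 1" and A0: "A 0 = 0" and Ae: "\<And>\<tau>. Im \<tau> > 0 \<Longrightarrow> u \<tau> = A (ee \<tau>)"
    and Bh: "B holomorphic_on ball 0 1" and B0: "B 0 = 0"
    and Be: "\<And>\<tau>. Im \<tau> > 0 \<Longrightarrow> u (-1/\<tau>) / \<tau>^2 = B (ee (\<tau> / of_nat p)) / of_nat p"
  shows "(deriv ^^ m) A 0 / fact m = - ((deriv ^^ (p * m)) B 0 / fact (p * m))"
proof -
  have p0: "p > 0" using pp prime_gt_0_nat by blast
  have pC: "(of_nat p :: complex) \<noteq> 0" using p0 by simp
  define uS where "uS \<tau> = u (-1/\<tau>) / \<tau>^2" for \<tau>
  define t where "t \<tau> = u \<tau> + (\<Sum>j<p. uS (\<tau> + of_nat j))" for \<tau>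
  define kk where "kk w = A (w ^ p) + (\<Sum>j<p. B (ee (of_nat j / of_nat p) * w)) / of_nat p" for w
  have ee_p: "ee \<tau> = ee (\<tau> / of_nat p) ^ p" for \<tau>
  proof -
    have "ee (of_nat p * (\<tau> / of_nat p)) = ee (\<tau> / of_nat p) ^ p" by (rule ee_nat_mult)
    then show ?thesis using pC by simp
  qed
  have uSe: "uS \<tau> = B (ee (\<tau> / of_nat p)) / of_nat p" if "Im \<tau> > 0" for \<tau>
    unfolding uS_def using Be[OF that] .
  have te: "t \<tau> = kk (ee (\<tau> / of_nat p))" if t0: "Im \<tau> > 0" for \<tau>
  proof -
    have "u \<tau> = A (ee (\<tau> / of_nat p) ^ p)" using Ae[OF t0] ee_p[of \<tau>] by simp
    moreover have "uS (\<tau> + of_nat j) = B (ee (of_nat j / of_nat p) * ee (\<tau> / of_nat p)) / of_nat p" for j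
    proof -
      have "Im (\<tau> + of_nat j) > 0" using t0 by simp
      then have "uS (\<tau> + of_nat j) = B (ee ((\<tau> + of_nat j) / of_nat p)) / of_nat p" by (rule uSe)
      also have "(\<tau> + of_nat j) / of_nat p = of_nat j / of_nat p + \<tau> / of_nat p" by (simp add: add_divide_distrib)
      finally show ?thesis by (simp add: ee_add)
    qed
    ultimately show ?thesis unfolding t_def kk_def by (simp add: sum_divide_distrib)
  qed
  have kh: "kk holomorphic_on ball 0 1"
  proof -
    have "(A \<circ> (\<lambda>w. w ^ p)) holomorphic_on ball 0 1"
    proof (rule holomorphic_on_compose_gen[OF _ Ah])
      show "(\<lambda>w. w ^ p) holomorphic_on ball (0::complex) 1" by (intro holomorphic_intros)
      show "(\<lambda>w. w ^ p) ` ball (0::complex) 1 \<subseteq> ball 0 1"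
        using p0 by (auto simp: dist_0_norm norm_power power_less_one_iff)
    qed
    moreover have "(\<lambda>w. B (ee (of_nat j / of_nat p) * w)) holomorphic_on ball 0 1" for j
    proof -
      have "(B \<circ> (\<lambda>w. ee (of_nat j / of_nat p) * w)) holomorphic_on ball 0 1"
      proof (rule holomorphic_on_compose_gen[OF _ Bh])
        show "(\<lambda>w. ee (of_nat j / of_nat p) * w) holomorphic_on ball 0 1" by (intro holomorphic_intros)
        show "(\<lambda>w. ee (of_nat j / of_nat p) * w) ` ball 0 1 \<subseteq> ball 0 1"
          by (auto simp: norm_mult norm_ee)
      qed
      then show ?thesis by (simp add: o_def)
    qed
    ultimately show ?thesis unfolding kk_def o_def
      by (intro holomorphic_intros holomorphic_on_sum) auto
  qed
  have k0: "kk 0 = 0" using A0 B0 p0 by (simp add: kk_def zero_power)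
  have tT: "t (\<tau> + 1) = t \<tau>" if t0: "Im \<tau> > 0" for \<tau>
  proof -
    have u1: "u (\<tau> + 1) = u \<tau>" using Ae[OF t0] Ae[of "\<tau> + 1"] t0 by (simp add: ee_add ee_1)
    define h where "h j = uS (\<tau> + of_nat j)" for j
    have hp: "h p = h 0"
    proof -
      have "h p = B (ee ((\<tau> + of_nat p) / of_nat p)) / of_nat p" unfolding h_def using t0 by (intro uSe) simp
      also have "(\<tau> + of_nat p) / of_nat p = \<tau> / of_nat p + 1" using pC by (simp add: field_simps)
      finally show ?thesis unfolding h_def using uSe[OF t0] by (simp add: ee_add ee_1)
    qed
    have "(\<Sum>j<p. uS (\<tau> + 1 + of_nat j)) = (\<Sum>j<p. h (Suc j))" unfolding h_def by (simp add: algebra_simps)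
    also have "\<dots> = (\<Sum>j<Suc p. h j) - h 0" by (simp only: sum.lessThan_Suc_shift) simp
    also have "\<dots> = (\<Sum>j<p. h j)" using hp by simp
    finally show ?thesis unfolding t_def h_def using u1 by simp
  qed
  have key: "uS (-1/\<tau> + of_nat j) = \<tau>^2 * uS (\<tau> + of_nat (pinv p j))" if t0: "Im \<tau> > 0" and j: "j \<in> {1..<p}" for \<tau> j
  proof -
    define k where "k = pinv p j"
    have kd: "p dvd j * k + 1" using pinv_prop[OF pp j] unfolding k_def by blast
    define J where "J = (of_nat j :: complex)"
    define Kc where "Kc = (of_nat k :: complex)"
    have \<tau>0: "\<tau> \<noteq> 0" using t0 by auto
    have tk0: "\<tau> + Kc \<noteq> 0"
    proof
      assume "\<tau> + Kc = 0"
      then have "Im (\<tau> + Kc) = 0" by simp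
      then show False using t0 unfolding Kc_def by simp
    qed
    have jt0: "J * \<tau> - 1 \<noteq> 0"
    proof
      assume "J * \<tau> - 1 = 0"
      then have "Im (J * \<tau> - 1) = 0" by simp
      then have "real j * Im \<tau> = 0" unfolding J_def by simp
      then show False using j t0 by simp
    qed
    define \<sigma> where "\<sigma> = -1 / (\<tau> + Kc)"
    have s0: "Im \<sigma> > 0"
    proof -
      have "Im (\<tau> + Kc) > 0" using t0 unfolding Kc_def by simp
      then show ?thesis unfolding \<sigma>_def Im_neg_inv using tk0 by simp
    qed
    have det: "(- int k) * int j - (-1) * (int j * int k + 1) = 1" by (simp add: algebra_simps)
    have dv: "int p dvd (int j * int k + 1)" using kd by (metis of_nat_1 of_nat_add of_nat_dvd_iff of_nat_mult)
    have sl: "slash2 u (- int k) (-1) (int j * int k + 1) (int j) \<sigma> = u \<sigma>" using inv[OF det dv s0] .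
    have num: "of_int (- int k) * \<sigma> + of_int (-1) = -\<tau> / (\<tau> + Kc)"
      unfolding \<sigma>_def using tk0 unfolding Kc_def by (simp add: field_simps)
    have jf: "of_int (int j * int k + 1) * \<sigma> + of_int (int j) = (J * \<tau> - 1) / (\<tau> + Kc)"
      unfolding \<sigma>_def J_def Kc_def using tk0 unfolding Kc_def by (simp add: field_simps)
    have mobv: "mob (- int k) (-1) (int j * int k + 1) (int j) \<sigma> = -\<tau> / (J * \<tau> - 1)"
    proof -
      have "mob (- int k) (-1) (int j * int k + 1) (int j) \<sigma> = (-\<tau> / (\<tau> + Kc)) / ((J * \<tau> - 1) / (\<tau> + Kc))"
        unfolding mob_def num jf ..
      also have "\<dots> = -\<tau> / (J * \<tau> - 1)" using tk0 by (rule div_div_cancel)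
      finally show ?thesis .
    qed
    have nz: "((J * \<tau> - 1) / (\<tau> + Kc))^2 \<noteq> 0" using jt0 tk0 by simp
    have "u (-\<tau> / (J * \<tau> - 1)) / ((J * \<tau> - 1) / (\<tau> + Kc))^2 = u \<sigma>"
      using sl unfolding slash2_mob mobv jf .
    then have usig: "u (-\<tau> / (J * \<tau> - 1)) = u \<sigma> * ((J * \<tau> - 1) / (\<tau> + Kc))^2"
      using nz by (simp add: divide_eq_eq)
    have e1: "-1 / (-1/\<tau> + J) = -\<tau> / (J * \<tau> - 1)" using \<tau>0 jt0 by (simp add: field_simps)
    have e2: "-1/\<tau> + J = (J * \<tau> - 1) / \<tau>" using \<tau>0 by (simp add: field_simps)
    have "uS (-1/\<tau> + J) = u (-1 / (-1/\<tau> + J)) / (-1/\<tau> + J)^2" unfolding uS_def ..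
    also have "\<dots> = u \<sigma> * ((J * \<tau> - 1) / (\<tau> + Kc))^2 / ((J * \<tau> - 1) / \<tau>)^2"
      unfolding e1 unfolding usig e2 ..
    also have "\<dots> = \<tau>^2 * (u \<sigma> / (\<tau> + Kc)^2)"
      using sq_ratio[OF jt0 \<tau>0] by simp
    also have "u \<sigma> / (\<tau> + Kc)^2 = uS (\<tau> + Kc)" unfolding uS_def \<sigma>_def by simp
    finally show ?thesis unfolding J_def Kc_def k_def .
  qed
  have tS: "t (-1/\<tau>) = \<tau>^2 * t \<tau>" if t0: "Im \<tau> > 0" for \<tau>
  proof -
    have \<tau>0: "\<tau> \<noteq> 0" using t0 by auto
    have s1: "u (-1/\<tau>) = \<tau>^2 * uS \<tau>" unfolding uS_def using \<tau>0 by simp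
    have s2: "uS (-1/\<tau> + of_nat 0) = \<tau>^2 * u \<tau>" unfolding uS_def using \<tau>0 by (simp add: power2_eq_square)
    have "(\<Sum>j<p. uS (-1/\<tau> + of_nat j)) = uS (-1/\<tau> + of_nat 0) + (\<Sum>j\<in>{1..<p}. uS (-1/\<tau> + of_nat j))"
      by (rule sum_split0[OF p0])
    also have "(\<Sum>j\<in>{1..<p}. uS (-1/\<tau> + of_nat j)) = (\<Sum>j\<in>{1..<p}. \<tau>^2 * uS (\<tau> + of_nat (pinv p j)))"
      by (rule sum.cong) (use key[OF t0] in auto)
    also have "\<dots> = \<tau>^2 * (\<Sum>j\<in>{1..<p}. uS (\<tau> + of_nat (pinv p j)))" by (simp add: sum_distrib_left)
    also have "(\<Sum>j\<in>{1..<p}. uS (\<tau> + of_nat (pinv p j))) = (\<Sum>j\<in>{1..<p}. uS (\<tau> + of_nat j))"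
      by (rule sum_pinv[OF pp])
    finally have "(\<Sum>j<p. uS (-1/\<tau> + of_nat j)) = \<tau>^2 * u \<tau> + \<tau>^2 * (\<Sum>j\<in>{1..<p}. uS (\<tau> + of_nat j))"
      using s2 by simp
    moreover have "(\<Sum>j<p. uS (\<tau> + of_nat j)) = uS (\<tau> + of_nat 0) + (\<Sum>j\<in>{1..<p}. uS (\<tau> + of_nat j))"
      by (rule sum_split0[OF p0])
    ultimately show ?thesis unfolding t_def using s1 by (simp add: algebra_simps)
  qed
  have t_zero: "t \<tau> = 0" if "Im \<tau> > 0" for \<tau>
    by (rule level_one_zero[where N = p and k = kk, OF p0 tT tS kh k0 te that])
  have kk_zero: "kk w = 0" if w: "w \<in> ball 0 1" for w
  proof (cases "w = 0")
    case True then show ?thesis using k0 by simp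
  next
    case False
    have "Im (lg w) > 0" using lg_uhp False w by simp
    then have im: "Im (of_nat p * lg w) > 0" using p0 by simp
    have "ee (of_nat p * lg w / of_nat p) = w" using pC ee_lg[OF False] by simp
    then show ?thesis using te[OF im] t_zero[OF im] by simp
  qed
  define \<alpha> where "\<alpha> n = (deriv ^^ n) A 0 / fact n" for n
  define \<beta> where "\<beta> n = (deriv ^^ n) B 0 / fact n" for n
  have "(\<lambda>m. (\<alpha> m + \<beta> (p * m)) * w ^ (p * m)) sums 0" if w: "w \<in> ball 0 1" for w
  proof -
    have wp: "w ^ p \<in> ball 0 1" using w p0 by (simp add: dist_norm norm_power power_less_one_iff)
    have sA: "(\<lambda>m. \<alpha> m * w ^ (p * m)) sums A (w ^ p)"
      using holomorphic_power_series[OF Ah wp] unfolding \<alpha>_def by (simp add: power_mult)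
    have "(\<lambda>m. of_nat p * \<beta> (p * m) * w ^ (p * m)) sums (\<Sum>j<p. B (ee (of_nat j / of_nat p) * w))"
      using filter_sums[OF Bh p0, of w] w unfolding \<beta>_def by simp
    then have "(\<lambda>m. of_nat p * \<beta> (p * m) * w ^ (p * m) / of_nat p) sums ((\<Sum>j<p. B (ee (of_nat j / of_nat p) * w)) / of_nat p)"
      by (rule sums_divide)
    then have sB: "(\<lambda>m. \<beta> (p * m) * w ^ (p * m)) sums ((\<Sum>j<p. B (ee (of_nat j / of_nat p) * w)) / of_nat p)"
      using pC by simp
    have "(\<lambda>m. \<alpha> m * w ^ (p * m) + \<beta> (p * m) * w ^ (p * m)) sums kk w"
      unfolding kk_def by (rule sums_add[OF sA sB])
    then show ?thesis using kk_zero[OF w] by (simp add: distrib_right)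
  qed
  then have "\<alpha> m + \<beta> (p * m) = 0" by (rule coeff_zero_from_sums[OF p0])
  then show ?thesis unfolding \<alpha>_def \<beta>_def by (simp add: eq_neg_iff_add_eq_0)
qed


lemma Q_identity:
  fixes x N :: real
  shows "((N+1)*(N+2) - 2*N*(N+2)*x + N*(N+1)*x^2) - (N+1)*(N+2)*(1-x)^3 =
         x * ((N+2)*(N+3) - 2*(N+1)*(N+3)*x + (N+1)*(N+2)*x^2)"
  by (simp add: algebra_simps power2_eq_square power3_eq_cube)

lemma closed_form:
  fixes x :: real
  shows "(1-x)^3 * (\<Sum>m<N. (real m+1)*(real m+2)*x^m) =
    2 - x^N * ((real N+1)*(real N+2) - 2*real N*(real N+2)*x + real N*(real N+1)*x^2)"
proof (induction N)
  case 0 then show ?case by simp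
next
  case (Suc N)
  have "(1-x)^3 * (\<Sum>m<Suc N. (real m+1)*(real m+2)*x^m) =
     (1-x)^3 * (\<Sum>m<N. (real m+1)*(real m+2)*x^m) + x^N * ((real N+1)*(real N+2)*(1-x)^3)"
    by (simp add: algebra_simps)
  also have "\<dots> = 2 - x^N * (((real N+1)*(real N+2) - 2*real N*(real N+2)*x + real N*(real N+1)*x^2)
       - (real N+1)*(real N+2)*(1-x)^3)"
    using Suc by (simp add: algebra_simps)
  also have "\<dots> = 2 - x^N * (x * ((real N+2)*(real N+3) - 2*(real N+1)*(real N+3)*x + (real N+1)*(real N+2)*x^2))"
    by (simp only: Q_identity)
  also have "\<dots> = 2 - x^(Suc N) * ((real (Suc N)+1)*(real (Suc N)+2) - 2*real (Suc N)*(real (Suc N)+2)*x + real (Suc N)*(real (Suc N)+1)*x^2)"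
    by (simp add: algebra_simps)
  finally show ?case .
qed

lemma psum_bound1:
  fixes x :: real
  assumes "0 \<le> x" "x < 1"
  shows "(\<Sum>m<N. (real m+1)*(real m+2)*x^m) \<le> 2 / (1-x)^3"
proof -
  define u where "u = 1 - x"
  have u: "u > 0" "u \<le> 1" using assms unfolding u_def by auto
  have Q: "(real N+1)*(real N+2) - 2*real N*(real N+2)*x + real N*(real N+1)*x^2 = 2 + 2 * real N * u + real N * (real N + 1) * u^2"
    unfolding u_def by (simp add: algebra_simps power2_eq_square)
  have Q0: "2 + 2 * real N * u + real N * (real N + 1) * u^2 \<ge> 0" using u by simp
  have "(1-x)^3 * (\<Sum>m<N. (real m+1)*(real m+2)*x^m) \<le> 2"
    unfolding closed_form Q using Q0 assms by simp
  moreover have "(1-x)^3 > 0" using assms by simp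
  ultimately show ?thesis by (simp add: field_simps mult.commute)
qed

lemma psum_bound2:
  fixes x :: real
  assumes "0 \<le> x"
  shows "(\<Sum>n<Suc N. (real n)^2 * x^n) \<le> x * (\<Sum>m<N. (real m+1)*(real m+2)*x^m)"
proof (induction N)
  case 0 then show ?case by simp
next
  case (Suc N)
  have "(real (Suc N))^2 * x^(Suc N) \<le> x * ((real N+1)*(real N+2)*x^N)"
  proof -
    have "(real (Suc N))^2 \<le> (real N+1)*(real N+2)" by (simp add: power2_eq_square algebra_simps)
    then have "(real (Suc N))^2 * x^(Suc N) \<le> (real N+1)*(real N+2) * x^(Suc N)"
      using assms by (intro mult_right_mono) auto
    then show ?thesis by (simp add: algebra_simps)
  qed
  then show ?case using Suc by (simp add: algebra_simps)
qed

lemma psum_bound: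
  fixes x :: real
  assumes "0 \<le> x" "x < 1"
  shows "(\<Sum>n<N. (real n)^2 * x^n) \<le> 2 * x / (1-x)^3"
proof -
  have "(\<Sum>n<N. (real n)^2 * x^n) \<le> (\<Sum>n<Suc N. (real n)^2 * x^n)"
    using assms by simp
  also have "\<dots> \<le> x * (\<Sum>m<N. (real m+1)*(real m+2)*x^m)" by (rule psum_bound2[OF assms(1)])
  also have "\<dots> \<le> x * (2 / (1-x)^3)" using psum_bound1[OF assms] assms(1) by (rule mult_left_mono)
  finally show ?thesis by (simp add: mult.commute)
qed

lemma series_bound:
  fixes H :: "complex \<Rightarrow> complex"
  assumes Hh: "H holomorphic_on ball 0 1" and D: "D \<ge> 0"
    and c: "\<And>n. cmod ((deriv ^^ n) H 0 / fact n) \<le> D * (real n)^2"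
    and t: "cmod t < 1"
  shows "cmod (H t / t) \<le> 2 * D / (1 - cmod t)^3"
proof (cases "t = 0")
  case True then show ?thesis using D by simp
next
  case False
  define x where "x = cmod t"
  have x0: "x > 0" and x1: "x < 1" using False t unfolding x_def by auto
  have s: "(\<lambda>n. (deriv ^^ n) H 0 / fact n * t ^ n) sums H t"
    using holomorphic_power_series[OF Hh, of t] t by simp
  then have lim: "(\<lambda>N. \<Sum>n<N. (deriv ^^ n) H 0 / fact n * t ^ n) \<longlonglongrightarrow> H t"
    by (simp add: sums_def)
  have pb: "cmod (\<Sum>n<N. (deriv ^^ n) H 0 / fact n * t ^ n) \<le> D * (2 * x / (1-x)^3)" for N
  proof -
    have "cmod (\<Sum>n<N. (deriv ^^ n) H 0 / fact n * t ^ n) \<le> (\<Sum>n<N. cmod ((deriv ^^ n) H 0 / fact n * t ^ n))"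
      by (rule norm_sum)
    also have "\<dots> \<le> (\<Sum>n<N. D * ((real n)^2 * x^n))"
    proof (rule sum_mono)
      fix n
      have "cmod ((deriv ^^ n) H 0 / fact n * t ^ n) = cmod ((deriv ^^ n) H 0 / fact n) * x^n"
        unfolding x_def norm_mult norm_power ..
      also have "\<dots> \<le> D * (real n)^2 * x^n" using c[of n] x0 by (intro mult_right_mono) auto
      finally show "cmod ((deriv ^^ n) H 0 / fact n * t ^ n) \<le> D * ((real n)^2 * x^n)" by simp
    qed
    also have "\<dots> = D * (\<Sum>n<N. (real n)^2 * x^n)" by (simp add: sum_distrib_left)
    also have "\<dots> \<le> D * (2 * x / (1-x)^3)" using psum_bound[of x N] x0 x1 D by (intro mult_left_mono) auto
    finally show ?thesis .
  qed
  have "cmod (H t) \<le> D * (2 * x / (1-x)^3)"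
    using tendsto_norm[OF lim] pb by (intro LIMSEQ_le_const2) auto
  then have "cmod (H t) / x \<le> D * (2 * x / (1-x)^3) / x" using x0 by (intro divide_right_mono) auto
  also have "\<dots> = 2 * D / (1-x)^3" using x0 by simp
  finally show ?thesis unfolding x_def by (simp add: norm_divide)
qed

lemma contour_bound:
  assumes "\<And>x. x \<in> closed_segment q q' \<Longrightarrow> cmod (g x) \<le> B" "B \<ge> 0"
  shows "cmod (contour_integral (linepath q q') g) \<le> B * cmod (q' - q)"
proof (cases "g contour_integrable_on linepath q q'")
  case True
  then have "(g has_contour_integral contour_integral (linepath q q') g) (linepath q q')"
    by (rule has_contour_integral_integral)
  then show ?thesis by (rule has_contour_integral_bound_linepath[OF _ assms(2,1)])
next
  case False then show ?thesis using assms(2) by (simp add: not_integrable_contour_integral)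
qed

lemma seg_in_ball:
  assumes "q \<in> ball (0::complex) R" "q' \<in> ball 0 R" "x \<in> closed_segment q q'"
  shows "cmod x < R"
proof -
  have "closed_segment q q' \<subseteq> ball 0 R" using assms(1,2) convex_ball by (simp add: closed_segment_subset)
  then show ?thesis using assms(3) by auto
qed

section \<open>The Atkin--Lehner image\<close>

context cf
begin

definition ft where "ft \<sigma> = f (-1 / (of_nat p * \<sigma>)) / (of_nat p * \<sigma>^2)"

lemma ft_inv:
  assumes det: "a * d - b * c = 1" and dv: "int p dvd c" and s: "Im \<sigma> > 0"
  shows "slash2 ft a b c d \<sigma> = ft \<sigma>"
proof -
  obtain c' where c': "c = int p * c'" using dv by blast
  have pC: "(of_nat p :: complex) \<noteq> 0" using p_pos by simp
  have s0: "\<sigma> \<noteq> 0" using s by auto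
  define \<tau> where "\<tau> = -1 / (of_nat p * \<sigma>)"
  have pts: "Im (of_nat p * \<sigma>) > 0" using s p_pos by simp
  then have t: "Im \<tau> > 0" unfolding \<tau>_def Im_neg_inv using pts pC s0 by simp
  have det': "(- d) * (- a) - c' * (b * int p) = 1" using det c' by (simp add: algebra_simps)
  have inv: "slash2 f (- d) c' (b * int p) (- a) \<tau> = f \<tau>"
    by (rule inv_g0[OF det' _ t]) simp
  define A where "A = of_int a * \<sigma> + of_int b"
  define C where "C = of_int c * \<sigma> + of_int d"
  have A0: "A \<noteq> 0" unfolding A_def using numer_nz[OF det s] .
  have C0: "C \<noteq> 0" unfolding C_def using denom_nz[OF det s] .
  have cc: "(of_int c :: complex) = of_nat p * of_int c'" using c' by simp
  have E3: "of_int (b * int p) * \<tau> + of_int (- a) = - A / \<sigma>"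
    unfolding \<tau>_def A_def using pC s0 by (simp add: field_simps)
  have E2: "mob (- d) c' (b * int p) (- a) \<tau> = - C / (of_nat p * A)"
  proof -
    have num: "of_int (- d) * \<tau> + of_int c' = C / (of_nat p * \<sigma>)"
      unfolding \<tau>_def C_def cc using pC s0 by (simp add: field_simps)
    have "mob (- d) c' (b * int p) (- a) \<tau> = (C / (of_nat p * \<sigma>)) / (- A / \<sigma>)"
      unfolding mob_def num E3 ..
    also have "\<dots> = - C / (of_nat p * A)" using pC s0 A0 by (simp add: field_simps)
    finally show ?thesis .
  qed
  have E1: "-1 / (of_nat p * mob a b c d \<sigma>) = - C / (of_nat p * A)"
    unfolding mob_def A_def[symmetric] C_def[symmetric] using pC A0 C0 by (simp add: field_simps)
  have fv: "f (- C / (of_nat p * A)) = (- A / \<sigma>)^2 * f \<tau>"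
  proof -
    have "f (- C / (of_nat p * A)) / (- A / \<sigma>)^2 = f \<tau>"
      using inv unfolding slash2_mob E2 E3 .
    moreover have "(- A / \<sigma>)^2 \<noteq> 0" using A0 s0 by simp
    ultimately show ?thesis by (simp add: divide_eq_eq)
  qed
  have "slash2 ft a b c d \<sigma> = ft (mob a b c d \<sigma>) / C^2" unfolding slash2_mob C_def ..
  also have "\<dots> = f (- C / (of_nat p * A)) / (of_nat p * (mob a b c d \<sigma>)^2 * C^2)"
    unfolding ft_def E1 by simp
  also have "mob a b c d \<sigma> = A / C" unfolding mob_def A_def C_def ..
  also have "f (- C / (of_nat p * A)) / (of_nat p * (A / C)^2 * C^2) = (- A / \<sigma>)^2 * f \<tau> / (of_nat p * A^2)"
    unfolding fv using C0 by (simp add: power_divide)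
  also have "\<dots> = f \<tau> / (of_nat p * \<sigma>^2)" using A0 s0 pC by (simp add: power_divide field_simps)
  also have "\<dots> = ft \<sigma>" unfolding ft_def \<tau>_def ..
  finally show ?thesis .
qed

lemma ft_e: "Im \<tau> > 0 \<Longrightarrow> ft \<tau> = qexp_zero p f (ee \<tau>)"
  unfolding ft_def using qzero_e by simp

lemma ft_S: 
  assumes "Im \<tau> > 0"
  shows "ft (-1/\<tau>) / \<tau>^2 = qexp_inf f (ee (\<tau> / of_nat p)) / of_nat p"
proof -
  have pC: "(of_nat p :: complex) \<noteq> 0" using p_pos by simp
  have t0: "\<tau> \<noteq> 0" using assms by auto
  have im: "Im (\<tau> / of_nat p) > 0" using assms p_pos by simp
  have "-1 / (of_nat p * (-1/\<tau>)) = \<tau> / of_nat p" using pC t0 by (simp add: field_simps)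
  then have "ft (-1/\<tau>) = f (\<tau> / of_nat p) / (of_nat p * (-1/\<tau>)^2)" unfolding ft_def by simp
  then have "ft (-1/\<tau>) / \<tau>^2 = f (\<tau> / of_nat p) / of_nat p"
    using t0 pC by (simp add: power_divide field_simps)
  then show ?thesis using qinf_e[OF im] by simp
qed

lemma G_coeff: "(deriv ^^ m) (qexp_zero p f) 0 / fact m = - fcoeff f (p * m)"
proof -
  have "(deriv ^^ m) (qexp_zero p f) 0 / fact m = - ((deriv ^^ (p * m)) (qexp_inf f) 0 / fact (p * m))"
    by (rule trace_coeff[OF prime_p ft_inv qzero_hol qzero_0 ft_e qinf_hol qinf_0 ft_S])
  then show ?thesis by (simp add: fcoeff_def)
qed

end

context cfe
begin

lemma G_coeff_bound: "cmod ((deriv ^^ m) (qexp_zero p f) 0 / fact m) \<le> real p * (real m)^2"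
proof -
  obtain ev where ev: "cmod ev \<le> real p" "\<forall>n. fcoeff f (p * n) = ev * fcoeff f n" using Up_bound by blast
  have "cmod ((deriv ^^ m) (qexp_zero p f) 0 / fact m) = cmod ev * cmod (fcoeff f m)"
    unfolding G_coeff using ev(2) by (simp add: norm_mult)
  also have "\<dots> \<le> real p * (real m)^2" using ev(1) coeff_bound[of m] by (intro mult_mono) auto
  finally show ?thesis .
qed

lemma F_coeff_bound: "cmod ((deriv ^^ m) (qexp_inf f) 0 / fact m) \<le> 1 * (real m)^2"
  using coeff_bound[of m] by (simp add: fcoeff_def)

lemma F_quot_bound:
  assumes "cmod t < 1"
  shows "cmod (qexp_inf f t / t) \<le> 2 / (1 - cmod t)^3"
  using series_bound[OF qinf_hol _ F_coeff_bound assms] by simp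

lemma G_quot_bound:
  assumes "cmod t < 1"
  shows "cmod (qexp_zero p f t / t) \<le> 2 * real p / (1 - cmod t)^3"
  using series_bound[OF qzero_hol _ G_coeff_bound assms] by simp

lemma mu_inf_bound:
  assumes "q \<in> ball 0 (1/100)" "q' \<in> ball 0 (1/100)"
  shows "cmod (mu_inf_diff f q q') \<le> 7 * cmod (q' - q)"
  unfolding mu_inf_diff_def
proof (rule contour_bound)
  fix x assume x: "x \<in> closed_segment q q'"
  have xr: "cmod x < 1/100" using seg_in_ball[OF assms x] .
  have "(99/100::real)^3 \<le> (1 - cmod x)^3" using xr by (intro power_mono) auto
  moreover have "(1 - cmod x)^3 > 0" using xr by simp
  ultimately have "2 / (1 - cmod x)^3 \<le> 2 / (99/100::real)^3"
    by (intro divide_left_mono mult_pos_pos) auto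
  also have "(99/100::real)^3 = 970299/1000000" by (simp add: power3_eq_cube)
  also have "2 / (970299/1000000::real) \<le> 7" by simp
  finally show "cmod (qexp_inf f x / x) \<le> 7" using F_quot_bound[of x] xr by simp
qed simp

lemma mu_zero_bound:
  assumes "q \<in> ball 0 (1 - 1 / (2 * real p))" "q' \<in> ball 0 (1 - 1 / (2 * real p))"
  shows "cmod (mu_zero_diff p f q q') \<le> 96 * real p ^ 4 * cmod (q' - q)"
  unfolding mu_zero_diff_def
proof (rule contour_bound)
  have pp: "real p \<ge> 2" using p_ge2 by simp
  fix x assume x: "x \<in> closed_segment q q'"
  have xr: "cmod x < 1 - 1 / (2 * real p)" using seg_in_ball[OF assms x] .
  have "1 / (2 * real p) > 0" using pp by simp
  then have x1: "cmod x < 1" using xr by linarith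
  have "(1 / (2 * real p))^3 \<le> (1 - cmod x)^3" using xr pp by (intro power_mono) auto
  then have "2 * real p / (1 - cmod x)^3 \<le> 2 * real p / (1 / (2 * real p))^3"
    using pp x1 by (intro divide_left_mono mult_pos_pos) auto
  also have "\<dots> = 16 * real p ^ 4" using pp by (simp add: power_divide field_simps power_numeral_reduce)
  also have "\<dots> \<le> 96 * real p ^ 4" by simp
  finally show "cmod (qexp_zero p f x / x) \<le> 96 * real p ^ 4" using G_quot_bound[OF x1] by simp
qed simp

end


theorem mainTheorem5:
  fixes p :: nat
  assumes "prime p"
    and "\<exists>f. weight2_cusp_form p f \<and> (\<exists>\<tau>\<in>uhp. f \<tau> \<noteq> 0)"
  shows "(\<forall>f\<in>D1 p. \<forall>q\<in>ball 0 (1/100). \<forall>q'\<in>ball 0 (1/100).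
            norm (mu_inf_diff f q q') \<le> 7 * norm (q' - q))
       \<and> (\<forall>f\<in>D1 p. \<forall>q\<in>ball 0 (1 - 1 / (2 * real p)). \<forall>q'\<in>ball 0 (1 - 1 / (2 * real p)).
            norm (mu_zero_diff p f q q') \<le> 96 * real p ^ 4 * norm (q' - q))
       \<and> (\<forall>f\<in>D1 p. \<forall>q\<in>ball 0 (5/1000). \<forall>q'\<in>ball 0 (5/1000).
            norm (mu_inf_diff f q q') \<le> 7 * norm (q' - q))
       \<and> (\<forall>f\<in>D1 p. \<forall>q\<in>ball 0 (1 - 1 / real p). \<forall>q'\<in>ball 0 (1 - 1 / real p).
            norm (mu_zero_diff p f q q') \<le> 96 * real p ^ 4 * norm (q' - q))"
proof -
  have loc: "cfe p f" if "f \<in> D1 p" for f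
    using assms(1) that unfolding D1_def by unfold_locales auto
  have A: "\<forall>f\<in>D1 p. \<forall>q\<in>ball 0 (1/100). \<forall>q'\<in>ball 0 (1/100).
            norm (mu_inf_diff f q q') \<le> 7 * norm (q' - q)"
  proof (intro ballI)
    fix f q q' assume f: "f \<in> D1 p" and q: "q \<in> ball (0::complex) (1/100)" and q': "q' \<in> ball (0::complex) (1/100)"
    interpret cfe p f by (rule loc[OF f])
    show "norm (mu_inf_diff f q q') \<le> 7 * norm (q' - q)" by (rule mu_inf_bound[OF q q'])
  qed
  have B: "\<forall>f\<in>D1 p. \<forall>q\<in>ball 0 (1 - 1 / (2 * real p)). \<forall>q'\<in>ball 0 (1 - 1 / (2 * real p)).
            norm (mu_zero_diff p f q q') \<le> 96 * real p ^ 4 * norm (q' - q)"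
  proof (intro ballI)
    fix f q q' assume f: "f \<in> D1 p" and q: "q \<in> ball (0::complex) (1 - 1 / (2 * real p))"
      and q': "q' \<in> ball (0::complex) (1 - 1 / (2 * real p))"
    interpret cfe p f by (rule loc[OF f])
    show "norm (mu_zero_diff p f q q') \<le> 96 * real p ^ 4 * norm (q' - q)" by (rule mu_zero_bound[OF q q'])
  qed
  have C: "\<forall>f\<in>D1 p. \<forall>q\<in>ball 0 (5/1000). \<forall>q'\<in>ball 0 (5/1000).
            norm (mu_inf_diff f q q') \<le> 7 * norm (q' - q)"
  proof (intro ballI)
    fix f q q' assume f: "f \<in> D1 p" and q: "q \<in> ball (0::complex) (5/1000)" and q': "q' \<in> ball (0::complex) (5/1000)"
    have "q \<in> ball 0 (1/100)" "q' \<in> ball 0 (1/100)" using q q' by auto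
    then show "norm (mu_inf_diff f q q') \<le> 7 * norm (q' - q)" using A f by blast
  qed
  have D: "\<forall>f\<in>D1 p. \<forall>q\<in>ball 0 (1 - 1 / real p). \<forall>q'\<in>ball 0 (1 - 1 / real p).
            norm (mu_zero_diff p f q q') \<le> 96 * real p ^ 4 * norm (q' - q)"
  proof (intro ballI)
    fix f q q' assume f: "f \<in> D1 p" and q: "q \<in> ball (0::complex) (1 - 1 / real p)"
      and q': "q' \<in> ball (0::complex) (1 - 1 / real p)"
    have pp: "real p > 0" using assms(1) prime_gt_0_nat by simp
    have "1 / (2 * real p) \<le> 1 / real p" using pp by (simp add: divide_le_eq)
    then have "1 - 1 / real p \<le> 1 - 1 / (2 * real p)" by simp
    then have "q \<in> ball 0 (1 - 1 / (2 * real p))" "q' \<in> ball 0 (1 - 1 / (2 * real p))"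
      using q q' by auto
    then show "norm (mu_zero_diff p f q q') \<le> 96 * real p ^ 4 * norm (q' - q)" using B f by blast
  qed
  show ?thesis using A B C D by blast
qed


end
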